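(* Assume $\|\varphi\|_{C^2([a,b])}<1$. Then there is a constant $C>0$ depending only on $\|w\|_{C^2([a,b])}$ such that, for every $s\in[0,1]$, every $x\in\mathbb R$ and every $0\le t\le t_0(s,x)$, $$|\partial_x\xi(t,x)-1|\le C\|\varphi\|_{C^2([a,b])},\qquad|\partial_x\eta(t,x)-w'(x)|\le C\|\varphi\|_{C^2([a,b])}.$$
   Context: Let $w\in C^3(\mathbb R)$ be periodic with $w>0$ on $[-1,1]$. Let $-1<a<b<1$ and let $\varphi:[a,b]\to\mathbb R$ be a polynomial with $\varphi^{(k)}(a)=\varphi^{(k)}(b)=0$ for $k=0,1,2,3$, extended by zero outside $[a,b]$. For $x\in\mathbb R$, $(\xi(t,x),\eta(t,x))$ is the unique global solution of $$\frac{d\xi}{dt}=-w'(\xi)\varphi(\xi)-(\eta-w(\xi))\varphi'(\xi),\quad\frac{d\eta}{dt}=\varphi(\xi),\quad \xi(0)=x,\ \eta(0)=w(x).$$ For $s\in[0,1]$, $t_0(s,x)\ge0$ denotes the first time $t\ge0$ with $\eta(t,x)=w(\xi(t,x))+s\varphi(\xi(t,x))$ (it exists and $t_0(s,x)\le s$). *)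

theory Defs
  imports "HOL-Analysis.Analysis" "HOL-Computational_Algebra.Polynomial"
begin

definition ext_poly :: "real poly \<Rightarrow> real \<Rightarrow> real \<Rightarrow> real \<Rightarrow> real" where
  "ext_poly p a b x = (if a \<le> x \<and> x \<le> b then poly p x else 0)"

definition supnorm_on :: "(real \<Rightarrow> real) \<Rightarrow> real \<Rightarrow> real \<Rightarrow> real" where
  "supnorm_on f a b = Sup ((\<lambda>x. \<bar>f x\<bar>) ` {a..b})"

definition C2norm_on :: "(real \<Rightarrow> real) \<Rightarrow> (real \<Rightarrow> real) \<Rightarrow> (real \<Rightarrow> real) \<Rightarrow> real \<Rightarrow> real \<Rightarrow> real" where
  "C2norm_on f f1 f2 a b = supnorm_on f a b + supnorm_on f1 a b + supnorm_on f2 a b"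

definition polyC2norm :: "real poly \<Rightarrow> real \<Rightarrow> real \<Rightarrow> real" where
  "polyC2norm p a b = C2norm_on (poly p) (poly (pderiv p)) (poly (pderiv (pderiv p))) a b"

definition first_time ::
  "(real \<Rightarrow> real \<Rightarrow> real) \<Rightarrow> (real \<Rightarrow> real \<Rightarrow> real) \<Rightarrow> (real \<Rightarrow> real) \<Rightarrow> (real \<Rightarrow> real)
     \<Rightarrow> real \<Rightarrow> real \<Rightarrow> real" where
  "first_time xi eta w phi s x =
     Inf {t. 0 \<le> t \<and> eta t x = w (xi t x) + s * phi (xi t x)}"

end

theory Submission
  imports Defs
begin


lemma deriv_split_at:
  fixes f :: "real \<Rightarrow> real"
  assumes "(f has_field_derivative D) (at x within {..x})"
      and "(f has_field_derivative D) (at x within {x..})"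
  shows "(f has_field_derivative D) (at x)"
proof -
  have "((\<lambda>y. (f y - f x) / (y - x)) \<longlongrightarrow> D) (at x within {..x} \<union> {x..})"
    using assms unfolding has_field_derivative_iff Lim_within_Un by simp
  moreover have "{..x} \<union> {x..} = (UNIV::real set)" by auto
  ultimately show ?thesis unfolding has_field_derivative_iff by simp
qed

lemma piece_deriv:
  fixes g g' :: "real \<Rightarrow> real"
  assumes g: "\<And>y. (g has_real_derivative g' y) (at y)"
    and "g a = 0" "g b = 0" "g' a = 0" "g' b = 0" "a < b"
  shows "((\<lambda>y. if a \<le> y \<and> y \<le> b then g y else 0) has_real_derivative
           (if a \<le> x \<and> x \<le> b then g' x else 0)) (at x)"
proof -
  define f where "f = (\<lambda>y. if a \<le> y \<and> y \<le> b then g y else (0::real))"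
  have "(f has_real_derivative (if a \<le> x \<and> x \<le> b then g' x else 0)) (at x)"
  proof (cases "x < a \<or> x > b")
    case True
    show ?thesis
    proof (cases "x < a")
      case True
      have "((\<lambda>y. 0::real) has_real_derivative 0) (at x)" by simp
      then have "(f has_real_derivative 0) (at x)"
        by (rule has_field_derivative_transform_within_open[where S="{..<a}"])
           (use True in \<open>auto simp: f_def\<close>)
      then show ?thesis using True by simp
    next
      case False
      with \<open>x < a \<or> x > b\<close> have "x > b" by simp
      have "((\<lambda>y. 0::real) has_real_derivative 0) (at x)" by simp
      then have "(f has_real_derivative 0) (at x)"
        by (rule has_field_derivative_transform_within_open[where S="{b<..}"])
           (use \<open>x > b\<close> in \<open>auto simp: f_def\<close>)
      then show ?thesis using \<open>x > b\<close> by simp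
    qed
  next
    case False
    hence xab: "a \<le> x" "x \<le> b" by auto
    show ?thesis
    proof (cases "x = a \<or> x = b")
      case False
      with xab have "a < x" "x < b" by auto
      have "(f has_real_derivative g' x) (at x)"
        by (rule has_field_derivative_transform_within_open[where S="{a<..<b}", OF g])
           (use \<open>a < x\<close> \<open>x < b\<close> in \<open>auto simp: f_def\<close>)
      then show ?thesis using xab by simp
    next
      case True
      then show ?thesis
      proof
        assume xa: "x = a"
        have l: "(f has_real_derivative 0) (at x within {..x})"
          by (rule has_field_derivative_transform_within[where g=f and f="\<lambda>_. 0" and d=1])
             (use xa assms in \<open>auto simp: f_def\<close>)
        have r: "(f has_real_derivative g' x) (at x within {x..})"
          by (rule has_field_derivative_transform_within[where f=g and d="b-a", OF has_field_derivative_at_within[OF g]])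
             (use xa assms in \<open>auto simp: f_def dist_real_def\<close>)
        show ?thesis using deriv_split_at[of f "g' x" x] l r xa assms by auto
      next
        assume xb: "x = b"
        have l: "(f has_real_derivative g' x) (at x within {..x})"
          by (rule has_field_derivative_transform_within[where f=g and d="b-a", OF has_field_derivative_at_within[OF g]])
             (use xb assms in \<open>auto simp: f_def dist_real_def\<close>)
        have r: "(f has_real_derivative 0) (at x within {x..})"
          by (rule has_field_derivative_transform_within[where g=f and f="\<lambda>_. 0" and d=1])
             (use xb assms in \<open>auto simp: f_def\<close>)
        show ?thesis using deriv_split_at[of f "g' x" x] l r xb assms by auto
      qed
    qed
  qed
  thus ?thesis by (simp add: f_def)
qed

lemma ext_poly_deriv:
  assumes "poly p a = 0" "poly p b = 0" "poly (pderiv p) a = 0" "poly (pderiv p) b = 0" "a < b"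
  shows "(ext_poly p a b has_real_derivative ext_poly (pderiv p) a b x) (at x)"
  using piece_deriv[of "poly p" "poly (pderiv p)" a b x] assms
  unfolding ext_poly_def[abs_def] by (auto intro: poly_DERIV)



lemma gronwall2:
  fixes f g f' g' :: "real \<Rightarrow> real"
  assumes T: "0 \<le> T" and L: "0 \<le> L" and c: "0 \<le> c"
  and df: "\<And>t. (f has_real_derivative f' t) (at t)"
  and dg: "\<And>t. (g has_real_derivative g' t) (at t)"
  and bd: "\<And>t. t \<in> {0..T} \<Longrightarrow> \<bar>f' t\<bar> + \<bar>g' t\<bar> \<le> L * (\<bar>f t\<bar> + \<bar>g t\<bar>) + c"
  and t: "t \<in> {0..T}"
  shows "\<bar>f t\<bar> + \<bar>g t\<bar> \<le> 2 * (\<bar>f 0\<bar> + \<bar>g 0\<bar> + c) * exp ((2*L+1) * t)"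
proof -
  define k where "k = 4*L + 2"
  define W where "W = (\<lambda>t. (f t)^2 + (g t)^2 + c^2)"
  define \<phi> where "\<phi> = (\<lambda>t. W t * exp (- k * t))"
  have dW: "(W has_real_derivative (2 * f t * f' t + 2 * g t * g' t)) (at t)" for t
    unfolding W_def by (auto intro!: derivative_eq_intros df dg)
  have Wbd: "2 * f t * f' t + 2 * g t * g' t \<le> k * W t" if "t \<in> {0..T}" for t
  proof -
    define S where "S = \<bar>f t\<bar> + \<bar>g t\<bar>"
    have S0: "0 \<le> S" by (simp add: S_def)
    have "2 * f t * f' t + 2 * g t * g' t \<le> 2 * S * (\<bar>f' t\<bar> + \<bar>g' t\<bar>)"
    proof -
      have "2 * f t * f' t \<le> 2 * \<bar>f t\<bar> * \<bar>f' t\<bar>"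
        by (metis abs_ge_self abs_mult mult.assoc mult_left_mono zero_le_numeral)
      moreover have "2 * g t * g' t \<le> 2 * \<bar>g t\<bar> * \<bar>g' t\<bar>"
        by (metis abs_ge_self abs_mult mult.assoc mult_left_mono zero_le_numeral)
      moreover have "\<bar>f t\<bar> * \<bar>f' t\<bar> + \<bar>g t\<bar> * \<bar>g' t\<bar> \<le> S * (\<bar>f' t\<bar> + \<bar>g' t\<bar>)"
        unfolding S_def by (simp add: algebra_simps)
      ultimately show ?thesis by linarith
    qed
    also have "\<dots> \<le> 2 * S * (L * S + c)"
      using bd[OF that] S0 unfolding S_def by (simp add: mult_left_mono)
    also have "\<dots> = 2 * L * S^2 + 2 * c * S" by (simp add: algebra_simps power2_eq_square)
    also have "\<dots> \<le> k * W t"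
    proof -
      have sq: "(x + y)^2 \<le> 2 * (x^2 + y^2)" for x y :: real
      proof -
        have "0 \<le> (x - y)^2" by simp
        thus ?thesis by (simp add: power2_eq_square algebra_simps)
      qed
      have s2: "S^2 \<le> 2 * ((f t)^2 + (g t)^2)"
        using sq[of "\<bar>f t\<bar>" "\<bar>g t\<bar>"] unfolding S_def by simp
      have cs: "2 * c * S \<le> c^2 + S^2"
      proof -
        have "0 \<le> (c - S)^2" by simp
        thus ?thesis by (simp add: power2_eq_square algebra_simps)
      qed
      define A where "A = (f t)^2 + (g t)^2"
      have h1: "2 * L * S^2 \<le> 4 * L * A"
        using mult_left_mono[OF s2, of "2*L"] L unfolding A_def by (simp add: algebra_simps)
      have h2: "0 \<le> 4 * L * c^2" using L by simp
      have e: "k * W t = 4*L*A + 2*A + 4*L*c^2 + 2*c^2"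
        unfolding k_def W_def A_def by (simp add: algebra_simps)
      show ?thesis unfolding e using h1 h2 s2 cs zero_le_power2[of c] unfolding A_def by linarith
    qed
    finally show ?thesis .
  qed
  have dphi: "(\<phi> has_real_derivative ((2 * f t * f' t + 2 * g t * g' t) - k * W t) * exp (- k * t)) (at t)" for t
    unfolding \<phi>_def by (auto intro!: derivative_eq_intros dW simp: algebra_simps)
  have "\<phi> t \<le> \<phi> 0"
  proof (rule DERIV_nonpos_imp_nonincreasing[of 0 t \<phi>])
    show "0 \<le> t" using t by simp
    fix x assume "0 \<le> x" "x \<le> t"
    hence "x \<in> {0..T}" using t by auto
    then show "\<exists>y. (\<phi> has_real_derivative y) (at x) \<and> y \<le> 0"
      using dphi[of x] Wbd[of x] by (intro exI[of _ "((2 * f x * f' x + 2 * g x * g' x) - k * W x) * exp (- k * x)"])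
         (auto simp: mult_nonpos_nonneg)
  qed
  hence Wt: "W t \<le> W 0 * exp (k * t)"
    unfolding \<phi>_def by (simp add: exp_minus field_simps)
  define S0 where "S0 = \<bar>f 0\<bar> + \<bar>g 0\<bar> + c"
  have W0: "W 0 \<le> S0^2"
  proof -
    have "(f 0)^2 + (g 0)^2 + c^2 \<le> (\<bar>f 0\<bar> + \<bar>g 0\<bar> + c)^2"
      using c by (simp add: power2_eq_square algebra_simps)
    thus ?thesis unfolding W_def S0_def .
  qed
  have ek: "exp (k * t) = (exp ((2*L+1)*t))^2"
    unfolding k_def by (simp add: power2_eq_square exp_add[symmetric] algebra_simps)
  have "(\<bar>f t\<bar> + \<bar>g t\<bar>)^2 \<le> 2 * W t"
  proof -
    have sq: "(x + y)^2 \<le> 2 * (x^2 + y^2)" for x y :: real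
    proof -
      have "0 \<le> (x - y)^2" by simp
      thus ?thesis by (simp add: power2_eq_square algebra_simps)
    qed
    have X: "(\<bar>f t\<bar> + \<bar>g t\<bar>)^2 \<le> 2 * ((f t)^2 + (g t)^2)"
      using sq[of "\<bar>f t\<bar>" "\<bar>g t\<bar>"] by simp
    have "2*((f t)^2+(g t)^2) \<le> 2*((f t)^2 + (g t)^2 + c^2)" by simp
    with X show ?thesis unfolding W_def by (rule order_trans)
  qed
  also have "\<dots> \<le> 2 * S0^2 * exp (k*t)" proof -
    have "W 0 * exp (k*t) \<le> S0^2 * exp (k*t)" using W0 by simp
    hence "W t \<le> S0^2 * exp (k*t)" by (rule order_trans[OF Wt])
    thus ?thesis by linarith
  qed
  also have "\<dots> \<le> (2 * S0 * exp ((2*L+1)*t))^2" unfolding ek by (simp add: power_mult_distrib)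
  finally have "(\<bar>f t\<bar> + \<bar>g t\<bar>)^2 \<le> (2 * S0 * exp ((2*L+1)*t))^2" .
  moreover have "0 \<le> 2 * S0 * exp ((2*L+1)*t)" unfolding S0_def using c by simp
  ultimately show ?thesis unfolding S0_def using power2_le_imp_le by blast
qed



lemma mvt_between:
  fixes g g' :: "real \<Rightarrow> real"
  assumes g: "\<And>x. (g has_real_derivative g' x) (at x)"
  shows "\<exists>c. min y z \<le> c \<and> c \<le> max y z \<and> g y - g z = g' c * (y - z)"
proof (cases y z rule: linorder_cases)
  case less
  then obtain c where "y < c" "c < z" "g z - g y = (z - y) * g' c"
    using MVT2[of y z g g'] g by blast
  then show ?thesis by (intro exI[of _ c]) (auto simp: algebra_simps)
next
  case equal
  then show ?thesis by (intro exI[of _ z]) auto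
next
  case greater
  then obtain c where "z < c" "c < y" "g y - g z = (y - z) * g' c"
    using MVT2[of z y g g'] g by blast
  then show ?thesis by (intro exI[of _ c]) (auto simp: algebra_simps)
qed

lemma cont_bound:
  fixes g :: "real \<Rightarrow> real"
  assumes "continuous_on {lo..hi} g"
  shows "\<exists>B\<ge>0. \<forall>x\<in>{lo..hi}. \<bar>g x\<bar> \<le> B"
proof -
  have "bounded (g ` {lo..hi})"
    by (rule compact_imp_bounded[OF compact_continuous_image[OF assms compact_Icc]])
  then obtain B where "\<forall>y\<in>g ` {lo..hi}. norm y \<le> B" unfolding bounded_iff by blast
  hence "\<forall>x\<in>{lo..hi}. \<bar>g x\<bar> \<le> max B 0" by auto
  thus ?thesis by (intro exI[of _ "max B 0"]) auto
qed

lemma lip_on: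
  fixes g g' :: "real \<Rightarrow> real"
  assumes g: "\<And>x. (g has_real_derivative g' x) (at x)"
    and c: "continuous_on {lo..hi} g'"
  shows "\<exists>L\<ge>0. \<forall>y\<in>{lo..hi}. \<forall>z\<in>{lo..hi}. \<bar>g y - g z\<bar> \<le> L * \<bar>y - z\<bar>"
proof -
  obtain B where B: "B \<ge> 0" "\<forall>x\<in>{lo..hi}. \<bar>g' x\<bar> \<le> B" using cont_bound[OF c] by blast
  have "\<bar>g y - g z\<bar> \<le> B * \<bar>y - z\<bar>" if "y\<in>{lo..hi}" "z\<in>{lo..hi}" for y z
  proof -
    obtain c where cc: "min y z \<le> c" "c \<le> max y z" "g y - g z = g' c * (y - z)"
      using mvt_between[OF g, of y z] by blast
    have "c \<in> {lo..hi}" using cc that by auto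
    hence "\<bar>g' c\<bar> \<le> B" using B by auto
    thus ?thesis unfolding cc(3) abs_mult by (simp add: mult_right_mono)
  qed
  thus ?thesis using B by blast
qed

lemma lin_approx:
  fixes g g' :: "real \<Rightarrow> real"
  assumes g: "\<And>x. (g has_real_derivative g' x) (at x)"
    and c: "continuous_on {lo..hi} g'"
    and e: "e > 0"
  shows "\<exists>d>0. \<forall>y\<in>{lo..hi}. \<forall>z\<in>{lo..hi}. \<bar>y - z\<bar> < d \<longrightarrow>
            \<bar>g y - g z - g' z * (y - z)\<bar> \<le> e * \<bar>y - z\<bar>"
proof -
  have "uniformly_continuous_on {lo..hi} g'"
    by (rule compact_uniformly_continuous[OF c compact_Icc])
  then obtain d where d: "d > 0" "\<forall>x\<in>{lo..hi}. \<forall>x'\<in>{lo..hi}. dist x' x < d \<longrightarrow> dist (g' x') (g' x) < e"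
    unfolding uniformly_continuous_on_def using e by blast
  have "\<bar>g y - g z - g' z * (y - z)\<bar> \<le> e * \<bar>y - z\<bar>"
    if "y\<in>{lo..hi}" "z\<in>{lo..hi}" "\<bar>y - z\<bar> < d" for y z
  proof -
    obtain c where cc: "min y z \<le> c" "c \<le> max y z" "g y - g z = g' c * (y - z)"
      using mvt_between[OF g, of y z] by blast
    have "c \<in> {lo..hi}" using cc that by auto
    moreover have "dist c z < d" using cc that by (auto simp: dist_real_def)
    ultimately have "\<bar>g' c - g' z\<bar> < e" using d that by (auto simp: dist_real_def)
    hence "\<bar>g' c - g' z\<bar> * \<bar>y - z\<bar> \<le> e * \<bar>y - z\<bar>" by (simp add: mult_right_mono)
    moreover have "g y - g z - g' z * (y - z) = (g' c - g' z) * (y - z)"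
      using cc(3) by (simp add: algebra_simps)
    ultimately show ?thesis by (simp add: abs_mult)
  qed
  thus ?thesis using d by blast
qed

lemma cauchy_lim:
  fixes f :: "real \<Rightarrow> real"
  assumes "\<And>e. e > 0 \<Longrightarrow> \<exists>d>0. \<forall>h k. 0 < \<bar>h\<bar> \<and> \<bar>h\<bar> < d \<and> 0 < \<bar>k\<bar> \<and> \<bar>k\<bar> < d \<longrightarrow> \<bar>f h - f k\<bar> < e"
  shows "\<exists>c. (f \<longlongrightarrow> c) (at 0)"
proof -
  have "cauchy_filter (filtermap f (at 0))"
    unfolding cauchy_filter_metric_filtermap
  proof (intro allI impI)
    fix e :: real assume "e > 0"
    then obtain d where d: "d > 0" "\<forall>h k. 0 < \<bar>h\<bar> \<and> \<bar>h\<bar> < d \<and> 0 < \<bar>k\<bar> \<and> \<bar>k\<bar> < d \<longrightarrow> \<bar>f h - f k\<bar> < e"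
      using assms by blast
    have "eventually (\<lambda>h. 0 < \<bar>h\<bar> \<and> \<bar>h\<bar> < d) (at (0::real))"
      unfolding eventually_at using d by (intro exI[of _ d]) (auto simp: dist_real_def)
    then show "\<exists>P. eventually P (at 0) \<and> (\<forall>x y. P x \<and> P y \<longrightarrow> dist (f x) (f y) < e)"
      using d by (intro exI[of _ "\<lambda>h. 0 < \<bar>h\<bar> \<and> \<bar>h\<bar> < d"]) (auto simp: dist_real_def)
  qed
  then obtain c where "filtermap f (at 0) \<le> nhds c"
    using cauchy_filter_complete_converges[of "filtermap f (at (0::real))" UNIV] complete_UNIV
    by (auto simp: filtermap_bot_iff)
  thus ?thesis unfolding filterlim_def by blast
qed

lemma const_region:
  fixes f f' :: "real \<Rightarrow> real"
  assumes df: "\<And>t. (f has_real_derivative f' t) (at t)"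
    and U: "open U" and z: "\<And>t. f t \<in> U \<Longrightarrow> f' t = 0"
    and f0: "f 0 \<in> U" and t1: "0 \<le> t1"
  shows "f t1 = f 0"
proof (rule ccontr)
  assume ne: "f t1 \<noteq> f 0"
  have contf: "continuous_on UNIV f" using df
    by (meson DERIV_continuous continuous_at_imp_continuous_on)
  define S where "S = {t\<in>{0..t1}. f t = f 0}"
  have S0: "0 \<in> S" using t1 by (simp add: S_def)
  have closedS: "closed S"
  proof -
    have "closed {t. f t = f 0}"
      using closed_Collect_eq[OF contf continuous_on_const[of UNIV "f 0"]] by simp
    moreover have "S = {0..t1} \<inter> {t. f t = f 0}" by (auto simp: S_def)
    ultimately show ?thesis by auto
  qed
  have bS: "bdd_above S" by (auto simp: S_def bdd_above_def)
  define \<tau> where "\<tau> = Sup S"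
  have tauS: "\<tau> \<in> S" unfolding \<tau>_def using closed_contains_Sup[OF _ bS closedS] S0 by blast
  hence ftau: "f \<tau> = f 0" and tau01: "0 \<le> \<tau>" "\<tau> \<le> t1" by (auto simp: S_def)
  have "\<tau> \<noteq> t1" using ftau ne by auto
  hence tault: "\<tau> < t1" using tau01 by simp
  have "isCont f \<tau>" using df DERIV_isCont by blast
  moreover have "f \<tau> \<in> U" using ftau f0 by simp
  ultimately have "continuous (at \<tau>) f" by simp
  obtain e where e: "e > 0" "ball (f \<tau>) e \<subseteq> U"
    using U \<open>f \<tau> \<in> U\<close> open_contains_ball by blast
  obtain d where d: "d > 0" "\<forall>y. dist y \<tau> < d \<longrightarrow> dist (f y) (f \<tau>) < e"
    using \<open>continuous (at \<tau>) f\<close> e(1) unfolding continuous_at_eps_delta by blast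
  define \<tau>' where "\<tau>' = min t1 (\<tau> + d/2)"
  have lt: "\<tau> < \<tau>'" using tault d(1) by (simp add: \<tau>'_def)
  have inU: "f y \<in> U" if "\<tau> \<le> y" "y \<le> \<tau>'" for y
  proof -
    have "dist y \<tau> < d" using that d(1) by (auto simp: \<tau>'_def dist_real_def)
    hence "dist (f y) (f \<tau>) < e" using d by blast
    thus ?thesis using e(2) by (auto simp: dist_commute)
  qed
  obtain z where zz: "\<tau> < z" "z < \<tau>'" "f \<tau>' - f \<tau> = (\<tau>' - \<tau>) * f' z"
    using MVT2[OF lt, of f f'] df by blast
  have "f' z = 0" using z inU zz by auto
  hence "f \<tau>' = f 0" using zz ftau by simp
  hence "\<tau>' \<in> S" using tau01 lt by (auto simp: S_def \<tau>'_def)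
  hence "\<tau>' \<le> \<tau>" unfolding \<tau>_def by (rule cSup_upper[OF _ bS])
  thus False using lt by simp
qed



lemma supnorm_bound:
  fixes f :: "real \<Rightarrow> real"
  assumes "continuous_on {a..b} f" "a \<le> b"
  shows "\<forall>y\<in>{a..b}. \<bar>f y\<bar> \<le> supnorm_on f a b" "0 \<le> supnorm_on f a b"
proof -
  have "bounded (f ` {a..b})"
    by (rule compact_imp_bounded[OF compact_continuous_image[OF assms(1) compact_Icc]])
  then obtain B where B: "\<forall>y\<in>f ` {a..b}. norm y \<le> B" unfolding bounded_iff by blast
  have bdd: "bdd_above ((\<lambda>x. \<bar>f x\<bar>) ` {a..b})"
    using B by (auto simp: bdd_above_def)
  show "\<forall>y\<in>{a..b}. \<bar>f y\<bar> \<le> supnorm_on f a b"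
    unfolding supnorm_on_def using bdd by (auto intro: cSup_upper)
  have "\<bar>f a\<bar> \<le> supnorm_on f a b"
    unfolding supnorm_on_def using bdd assms(2) by (auto intro: cSup_upper)
  thus "0 \<le> supnorm_on f a b" by linarith
qed

locale sys =
  fixes w w1 w2 w3 :: "real \<Rightarrow> real" and a b :: real and p :: "real poly"
    and xi eta :: "real \<Rightarrow> real \<Rightarrow> real" and M :: real
  assumes dw: "\<forall>x. (w has_real_derivative w1 x) (at x)"
    and dw1: "\<forall>x. (w1 has_real_derivative w2 x) (at x)"
    and dw2: "\<forall>x. (w2 has_real_derivative w3 x) (at x)"
    and a1: "-1 < a" and ab: "a < b" and b1: "b < 1"
    and van: "\<forall>k\<le>3. poly ((pderiv ^^ k) p) a = 0 \<and> poly ((pderiv ^^ k) p) b = 0"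
    and dxi: "\<forall>x t. ((\<lambda>t. xi t x) has_real_derivative
               (- w1 (xi t x) * ext_poly p a b (xi t x)
                - (eta t x - w (xi t x)) * ext_poly (pderiv p) a b (xi t x))) (at t)"
    and deta: "\<forall>x t. ((\<lambda>t. eta t x) has_real_derivative ext_poly p a b (xi t x)) (at t)"
    and init: "\<forall>x. xi 0 x = x \<and> eta 0 x = w x"
    and Mb: "C2norm_on w w1 w2 a b \<le> M"
    and Nb: "polyC2norm p a b < 1"
begin

abbreviation "P \<equiv> ext_poly p a b"
abbreviation "P1 \<equiv> ext_poly (pderiv p) a b"
abbreviation "P2 \<equiv> ext_poly (pderiv (pderiv p)) a b"
abbreviation "P3 \<equiv> ext_poly (pderiv (pderiv (pderiv p))) a b"
abbreviation "N \<equiv> polyC2norm p a b"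
abbreviation "F1 y e \<equiv> - w1 y * P y - (e - w y) * P1 y"

lemma van': "poly p a = 0" "poly p b = 0" "poly (pderiv p) a = 0" "poly (pderiv p) b = 0"
  "poly (pderiv (pderiv p)) a = 0" "poly (pderiv (pderiv p)) b = 0"
  "poly (pderiv (pderiv (pderiv p))) a = 0" "poly (pderiv (pderiv (pderiv p))) b = 0"
proof -
  have "poly ((pderiv ^^ k) p) a = 0 \<and> poly ((pderiv ^^ k) p) b = 0" if "k \<le> 3" for k
    using van that by blast
  from this[of 0] this[of 1] this[of 2] this[of 3]
  show "poly p a = 0" "poly p b = 0" "poly (pderiv p) a = 0" "poly (pderiv p) b = 0"
  "poly (pderiv (pderiv p)) a = 0" "poly (pderiv (pderiv p)) b = 0"
  "poly (pderiv (pderiv (pderiv p))) a = 0" "poly (pderiv (pderiv (pderiv p))) b = 0"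
    by (simp_all add: numeral_eq_Suc)
qed

lemma dP: "(P has_real_derivative P1 y) (at y)"
  by (rule ext_poly_deriv) (use van' ab in auto)
lemma dP1: "(P1 has_real_derivative P2 y) (at y)"
  by (rule ext_poly_deriv) (use van' ab in auto)
lemma dP2: "(P2 has_real_derivative P3 y) (at y)"
  by (rule ext_poly_deriv) (use van' ab in auto)

lemma contP: "continuous_on S P" "continuous_on S P1" "continuous_on S P2"
  using dP dP1 dP2 by (meson DERIV_continuous continuous_at_imp_continuous_on)+
lemma contw: "continuous_on S w" "continuous_on S w1" "continuous_on S w2"
  using dw dw1 dw2 by (meson DERIV_continuous continuous_at_imp_continuous_on)+

lemma Nbounds: "\<bar>P y\<bar> \<le> N" "\<bar>P1 y\<bar> \<le> N" "\<bar>P2 y\<bar> \<le> N" "0 \<le> N" "N \<le> 1"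
proof -
  have c: "continuous_on {a..b} (poly q)" for q :: "real poly" by (intro continuous_intros)
  note s0 = supnorm_bound[OF c[of p] less_imp_le[OF ab]] and s1 = supnorm_bound[OF c[of "pderiv p"] less_imp_le[OF ab]]
    and s2 = supnorm_bound[OF c[of "pderiv (pderiv p)"] less_imp_le[OF ab]]
  have Ndef: "N = supnorm_on (poly p) a b + supnorm_on (poly (pderiv p)) a b
      + supnorm_on (poly (pderiv (pderiv p))) a b"
    unfolding polyC2norm_def C2norm_on_def by simp
  show "0 \<le> N" using s0 s1 s2 ab Ndef by simp
  show "N \<le> 1" using Nb by simp
  show "\<bar>P y\<bar> \<le> N"
  proof (cases "y \<in> {a..b}")
    case True thus ?thesis using s0(1)[rule_format, OF True] s1(2) s2(2) unfolding Ndef ext_poly_def by auto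
  qed (use s0(2) s1(2) s2(2) Ndef in \<open>auto simp: ext_poly_def\<close>)
  show "\<bar>P1 y\<bar> \<le> N"
  proof (cases "y \<in> {a..b}")
    case True thus ?thesis using s1(1)[rule_format, OF True] s0(2) s2(2) unfolding Ndef ext_poly_def by auto
  qed (use s0(2) s1(2) s2(2) Ndef in \<open>auto simp: ext_poly_def\<close>)
  show "\<bar>P2 y\<bar> \<le> N"
  proof (cases "y \<in> {a..b}")
    case True thus ?thesis using s2(1)[rule_format, OF True] s0(2) s1(2) unfolding Ndef ext_poly_def by auto
  qed (use s0(2) s1(2) s2(2) Ndef in \<open>auto simp: ext_poly_def\<close>)
qed

lemma Mbounds: "\<And>y. y \<in> {a..b} \<Longrightarrow> \<bar>w y\<bar> \<le> M"
  "\<And>y. y \<in> {a..b} \<Longrightarrow> \<bar>w1 y\<bar> \<le> M" "\<And>y. y \<in> {a..b} \<Longrightarrow> \<bar>w2 y\<bar> \<le> M" "0 \<le> M"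
proof -
  note s0 = supnorm_bound[OF contw(1) less_imp_le[OF ab]] and s1 = supnorm_bound[OF contw(2) less_imp_le[OF ab]]
    and s2 = supnorm_bound[OF contw(3) less_imp_le[OF ab]]
  have Mdef: "C2norm_on w w1 w2 a b = supnorm_on w a b + supnorm_on w1 a b + supnorm_on w2 a b"
    unfolding C2norm_on_def by simp
  show "0 \<le> M" using s0 s1 s2 ab Mdef Mb by simp
  show "\<bar>w y\<bar> \<le> M" if "y \<in> {a..b}" for y using s0(1)[rule_format, OF that] s1(2) s2(2) Mdef Mb by linarith
  show "\<bar>w1 y\<bar> \<le> M" if "y \<in> {a..b}" for y using s1(1)[rule_format, OF that] s0(2) s2(2) Mdef Mb by linarith
  show "\<bar>w2 y\<bar> \<le> M" if "y \<in> {a..b}" for y using s2(1)[rule_format, OF that] s0(2) s1(2) Mdef Mb by linarith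
qed

lemma P_out: "y \<notin> {a..b} \<Longrightarrow> P y = 0 \<and> P1 y = 0 \<and> P2 y = 0"
  by (auto simp: ext_poly_def)

lemma dxi': "((\<lambda>t. xi t x) has_real_derivative F1 (xi t x) (eta t x)) (at t)"
  using dxi by blast
lemma deta': "((\<lambda>t. eta t x) has_real_derivative P (xi t x)) (at t)"
  using deta by blast

lemma F1_out: "y \<notin> {a..b} \<Longrightarrow> F1 y e = 0"
  using P_out[of y] by simp

lemma xi_out:
  assumes x: "x \<notin> {a..b}" and t: "0 \<le> t"
  shows "xi t x = x \<and> eta t x = w x"
proof -
  have U: "open (- {a..b})" by auto
  have dX: "\<And>s. ((\<lambda>t. xi t x) has_real_derivative F1 (xi s x) (eta s x)) (at s)" by (rule dxi')
  have dE: "\<And>s. ((\<lambda>t. eta t x) has_real_derivative P (xi s x)) (at s)" by (rule deta')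
  have z: "F1 (xi s x) (eta s x) = 0" if "xi s x \<in> - {a..b}" for s
    using F1_out that by simp
  have x0: "xi 0 x \<in> - {a..b}" using init x by simp
  have xr: "xi r x = x" if "0 \<le> r" for r
    using const_region[where f="\<lambda>t. xi t x", OF dX U z x0 that] init by simp
  obtain c where c: "min t 0 \<le> c" "c \<le> max t 0" "eta t x - eta 0 x = P (xi c x) * (t - 0)"
    using mvt_between[where g="\<lambda>t. eta t x", OF dE, of t 0] by blast
  have "xi c x = x" using c t xr by auto
  hence "P (xi c x) = 0" using x P_out by auto
  hence "eta t x = eta 0 x" using c by simp
  thus ?thesis using xr[OF t] init by simp
qed

lemma xi_in:
  assumes x: "x \<in> {a..b}" and t: "0 \<le> t"
  shows "xi t x \<in> {a..b}"
proof (rule ccontr)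
  assume nin: "xi t x \<notin> {a..b}"
  define g where "g = (\<lambda>r. xi (t - r) x)"
  have dg: "(g has_real_derivative F1 (xi (t - r) x) (eta (t - r) x) * -1) (at r)" for r
  proof -
    have "((\<lambda>r. t - r) has_real_derivative -1) (at r)"
      by (auto intro!: derivative_eq_intros)
    from DERIV_chain2[OF dxi'[of x "t-r"] this] show ?thesis unfolding g_def by simp
  qed
  have U: "open (- {a..b})" by auto
  have z: "F1 (xi (t - r) x) (eta (t - r) x) * -1 = 0" if "g r \<in> - {a..b}" for r
    using F1_out that by (simp add: g_def)
  have g0: "g 0 \<in> - {a..b}" using nin by (simp add: g_def)
  have "g t = g 0"
    by (rule const_region[where f=g, OF dg U z g0 t])
  thus False using nin x init by (simp add: g_def)
qed

lemma eta_near: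
  assumes t: "0 \<le> t" shows "\<bar>eta t x - w x\<bar> \<le> N * t"
proof -
  have dE: "\<And>s. ((\<lambda>t. eta t x) has_real_derivative P (xi s x)) (at s)" by (rule deta')
  obtain c where c: "min t 0 \<le> c" "c \<le> max t 0" "eta t x - eta 0 x = P (xi c x) * (t - 0)"
    using mvt_between[where g="\<lambda>t. eta t x", OF dE, of t 0] by blast
  have "\<bar>P (xi c x)\<bar> * t \<le> N * t" using Nbounds(1)[of "xi c x"] t
    by (simp add: mult_right_mono)
  thus ?thesis using c init t by (simp add: abs_mult)
qed

definition "Ub = 2 * (1 + M^2) * exp (2*M+1)"

lemma u_bound:
  assumes x: "x \<in> {a..b}" and t: "t \<in> {0..1}"
  shows "\<bar>eta t x - w (xi t x)\<bar> \<le> Ub * N"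
proof -
  define u where "u = (\<lambda>t. eta t x - w (xi t x))"
  define u' where "u' = (\<lambda>t. P (xi t x) - w1 (xi t x) * F1 (xi t x) (eta t x))"
  have du: "(u has_real_derivative u' t) (at t)" for t
  proof -
    have d1: "((\<lambda>t. w (xi t x)) has_real_derivative w1 (xi t x) * F1 (xi t x) (eta t x)) (at t)"
      by (rule DERIV_chain2[OF dw[rule_format] dxi'])
    show ?thesis unfolding u_def u'_def by (rule DERIV_diff[OF deta' d1])
  qed
  have bd: "\<bar>u' t\<bar> + \<bar>0\<bar> \<le> M * (\<bar>u t\<bar> + \<bar>0\<bar>) + (1 + M^2) * N" if "t \<in> {0..1}" for t
  proof -
    have xin: "xi t x \<in> {a..b}" using xi_in[OF x] that by simp
    define W where "W = w1 (xi t x)"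
    define Q where "Q = P (xi t x)"
    define Q1 where "Q1 = P1 (xi t x)"
    have W: "\<bar>W\<bar> \<le> M" using Mbounds(2)[OF xin] by (simp add: W_def)
    have Q: "\<bar>Q\<bar> \<le> N" "\<bar>Q1\<bar> \<le> N" using Nbounds by (auto simp: Q_def Q1_def)
    have eq: "u' t = Q + W * W * Q + W * u t * Q1"
      unfolding u'_def u_def W_def Q_def Q1_def by (simp add: algebra_simps)
    have "\<bar>W * W * Q\<bar> \<le> M * M * N"
      unfolding abs_mult using W Q Mbounds(4) by (intro mult_mono) auto
    moreover have "\<bar>W * u t * Q1\<bar> \<le> M * \<bar>u t\<bar> * 1"
      unfolding abs_mult using W Q Nbounds(5) Mbounds(4) by (intro mult_mono) auto
    ultimately have "\<bar>u' t\<bar> \<le> N + M * M * N + M * \<bar>u t\<bar>"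
      unfolding eq using Q abs_triangle_ineq[of "Q + W * W * Q" "W * u t * Q1"] abs_triangle_ineq[of Q "W * W * Q"] by linarith
    thus ?thesis by (simp add: power2_eq_square algebra_simps)
  qed
  have G: "\<bar>u t\<bar> + \<bar>(\<lambda>_. 0::real) t\<bar> \<le> 2 * (\<bar>u 0\<bar> + \<bar>(\<lambda>_. 0::real) 0\<bar> + (1 + M^2) * N) * exp ((2*M+1) * t)"
    by (rule gronwall2[where f' = u' and g' = "\<lambda>_. 0" and T = 1, OF _ Mbounds(4) _ du _ bd t])
       (use Nbounds in auto)
  have u0: "u 0 = 0" using init by (simp add: u_def)
  have ex: "exp ((2*M+1) * t) \<le> exp (2*M+1)" using t Mbounds(4) by (simp add: mult_left_le)
  have G': "\<bar>u t\<bar> \<le> 2 * ((1 + M^2) * N) * exp ((2*M+1) * t)" using G u0 by simp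
  have nn: "0 \<le> 2 * ((1 + M^2) * N)" using Nbounds(4) by simp
  have "2 * ((1 + M^2) * N) * exp ((2*M+1) * t) \<le> 2 * ((1 + M^2) * N) * exp (2*M+1)"
    using mult_left_mono[OF ex nn] .
  with G' have "\<bar>u t\<bar> \<le> 2 * ((1 + M^2) * N) * exp (2*M+1)" by (rule order_trans)
  thus ?thesis unfolding Ub_def u_def by (simp add: algebra_simps)
qed

end


context sys begin

lemma contXE: "continuous_on S (\<lambda>t. xi t x)" "continuous_on S (\<lambda>t. eta t x)"
  using dxi' deta' by (meson DERIV_continuous continuous_at_imp_continuous_on)+

lemma contPc: "continuous_on S (\<lambda>t. P (xi t x))"
  by (rule continuous_on_compose2[OF contP(1)[of UNIV] contXE(1)]) auto

lemma contWX: "continuous_on S (\<lambda>t. w (xi t x))"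
  by (rule continuous_on_compose2[OF contw(1)[of UNIV] contXE(1)]) auto

lemma contU: "continuous_on S (\<lambda>t. eta t x - w (xi t x))"
proof -
  have "continuous_on S (\<lambda>t. w (xi t x))"
    by (rule continuous_on_compose2[OF contw(1)[of UNIV] contXE(1)]) auto
  thus ?thesis using contXE(2) by (intro continuous_intros)
qed

lemma sign_lemma:
  assumes x: "x \<in> {a..b}" and T: "0 \<le> T" and nz: "\<forall>t\<in>{0..T}. P (xi t x) \<noteq> 0"
    and t: "t \<in> {0..T}"
  shows "P x * P (xi t x) > 0 \<and> P x * (eta t x - w (xi t x)) \<ge> t * (P x * P (xi t x))"
proof -
  define Pc where "Pc = (\<lambda>t. P (xi t x))"
  define u where "u = (\<lambda>t. eta t x - w (xi t x))"
  have Pc0: "Pc 0 = P x" using init by (simp add: Pc_def)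
  have u0: "u 0 = 0" using init by (simp add: u_def)
  have nzt: "Pc y \<noteq> 0" if "y \<in> {0..T}" for y using nz that by (simp add: Pc_def)
  have cPc: "continuous_on {0..y} Pc" for y unfolding Pc_def by (rule contPc)
  have sgn: "P x * Pc y > 0" if y: "y \<in> {0..T}" for y
  proof (rule ccontr)
    assume npos: "\<not> P x * Pc y > 0"
    have ny: "Pc y \<noteq> 0" and n0: "Pc 0 \<noteq> 0" using nzt y T by auto
    have y0: "0 \<le> y" using y by simp
    obtain z where "0 \<le> z" "z \<le> y" "Pc z = 0"
    proof (cases "Pc 0 > 0")
      case True
      hence "Pc y < 0" using npos ny Pc0 by (metis linorder_neqE_linordered_idom mult_pos_pos)
      then show ?thesis using IVT2'[of Pc y 0 0, OF _ _ y0 cPc] True that by force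
    next
      case False
      hence "Pc 0 < 0" using n0 by simp
      hence "Pc y > 0" using npos ny Pc0 by (metis linorder_neqE_linordered_idom mult_neg_neg)
      then show ?thesis using IVT'[of Pc 0 0 y, OF _ _ y0 cPc] \<open>Pc 0 < 0\<close> that by force
    qed
    thus False using nzt y by auto
  qed
  have "P x * u t \<ge> t * (P x * Pc t)"
  proof (cases "t = 0")
    case True thus ?thesis using u0 by simp
  next
    case False
    hence tpos: "0 < t" using t by simp
    define r where "r = (\<lambda>t. u t / Pc t)"
    define r' where "r' = (\<lambda>y. ((Pc y - w1 (xi y x) * F1 (xi y x) (eta y x)) * Pc y
                  - u y * (P1 (xi y x) * F1 (xi y x) (eta y x))) / (Pc y * Pc y))"
    have du: "(u has_real_derivative Pc y - w1 (xi y x) * F1 (xi y x) (eta y x)) (at y)" for y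
    proof -
      have d1: "((\<lambda>t. w (xi t x)) has_real_derivative w1 (xi y x) * F1 (xi y x) (eta y x)) (at y)"
        by (rule DERIV_chain2[OF dw[rule_format] dxi'])
      show ?thesis unfolding u_def Pc_def by (rule DERIV_diff[OF deta' d1])
    qed
    have dPc: "(Pc has_real_derivative P1 (xi y x) * F1 (xi y x) (eta y x)) (at y)" for y
      unfolding Pc_def by (rule DERIV_chain2[OF dP dxi'])
    have dr: "(r has_real_derivative r' y) (at y)" if "0 \<le> y" "y \<le> t" for y
    proof -
      have "Pc y \<noteq> 0" using nzt that t by auto
      from DERIV_divide[OF du dPc this] show ?thesis unfolding r_def r'_def .
    qed
    obtain z where z: "0 < z" "z < t" "r t - r 0 = (t - 0) * r' z"
      using MVT2[OF tpos dr] by blast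
    have r'1: "r' z \<ge> 1"
    proof -
      define q where "q = w1 (xi z x) * Pc z + u z * P1 (xi z x)"
      have F: "F1 (xi z x) (eta z x) = - q" unfolding q_def Pc_def u_def by (simp add: algebra_simps)
      have num: "(Pc z - w1 (xi z x) * F1 (xi z x) (eta z x)) * Pc z
                  - u z * (P1 (xi z x) * F1 (xi z x) (eta z x)) = Pc z * Pc z + q * q"
        unfolding F q_def by (simp add: algebra_simps)
      have "Pc z \<noteq> 0" using nzt[of z] z t by simp
      hence pos: "Pc z * Pc z > 0" by (cases "Pc z > 0") (auto intro: mult_pos_pos mult_neg_neg)
      have "Pc z * Pc z \<le> Pc z * Pc z + q * q" by simp
      thus ?thesis unfolding r'_def num using pos by (simp add: le_divide_eq)
    qed
    have "r 0 = 0" using u0 by (simp add: r_def)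
    moreover have "t * 1 \<le> t * r' z" using r'1 tpos by (intro mult_left_mono) auto
    ultimately have rt: "r t \<ge> t" using z by simp
    have "u t = r t * Pc t" using nzt t unfolding r_def by simp
    hence "P x * u t = P x * (r t * Pc t)" by (rule arg_cong)
    also have "\<dots> = r t * (P x * Pc t)" by (simp add: algebra_simps)
    finally have "P x * u t = r t * (P x * Pc t)" .
    moreover have "t * (P x * Pc t) \<le> r t * (P x * Pc t)"
      using rt sgn[OF t] by (simp add: mult_right_mono)
    ultimately show ?thesis by linarith
  qed
  thus ?thesis using sgn[OF t] unfolding Pc_def u_def by simp
qed

lemma t0_exists:
  assumes x: "x \<in> {a..b}" and s: "s \<in> {0..1}"
  shows "\<exists>\<tau>. 0 \<le> \<tau> \<and> \<tau> \<le> s \<and> eta \<tau> x = w (xi \<tau> x) + s * P (xi \<tau> x)"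
proof (cases "P x = 0 \<or> s = 0")
  case True
  thus ?thesis using init by (intro exI[of _ 0]) (use s in auto)
next
  case False
  hence Px: "P x \<noteq> 0" and spos: "0 < s" using s by auto
  define k where "k = (\<lambda>t. P x * (eta t x - w (xi t x) - s * P (xi t x)))"
  have ck: "continuous_on {0..y} k" for y
    unfolding k_def by (auto intro!: continuous_intros contXE contWX contPc)
  have k0: "k 0 \<le> 0"
  proof -
    have e: "k 0 = - (s * (P x * P x))" using init by (simp add: k_def algebra_simps)
    have "0 \<le> s * (P x * P x)" using s by simp
    thus ?thesis using e by simp
  qed
  obtain \<tau>1 where t1: "0 \<le> \<tau>1" "\<tau>1 \<le> s" "k \<tau>1 \<ge> 0"
  proof (cases "\<forall>t\<in>{0..s}. P (xi t x) \<noteq> 0")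
    case True
    have "P x * P (xi s x) > 0 \<and> P x * (eta s x - w (xi s x)) \<ge> s * (P x * P (xi s x))"
      by (rule sign_lemma[OF x _ True]) (use spos in auto)
    hence ks: "k s \<ge> 0" unfolding k_def by (simp add: algebra_simps)
    show ?thesis by (rule that[of s]) (use spos ks in auto)
  next
    case False
    define Z where "Z = {t\<in>{0..s}. P (xi t x) = 0}"
    have Zne: "Z \<noteq> {}" using False by (auto simp: Z_def)
    have cZ: "closed Z"
    proof -
      have "closed {t. P (xi t x) = 0}"
        using closed_Collect_eq[OF contPc continuous_on_const[of UNIV 0]] by simp
      moreover have "Z = {0..s} \<inter> {t. P (xi t x) = 0}" by (auto simp: Z_def)
      ultimately show ?thesis by auto
    qed
    have bZ: "bdd_below Z" by (auto simp: Z_def bdd_below_def)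
    define \<tau> where "\<tau> = Inf Z"
    have tZ: "\<tau> \<in> Z" unfolding \<tau>_def using closed_contains_Inf[OF Zne bZ cZ] .
    hence tau: "0 \<le> \<tau>" "\<tau> \<le> s" "P (xi \<tau> x) = 0" by (auto simp: Z_def)
    have before: "P (xi y x) \<noteq> 0" if "0 \<le> y" "y < \<tau>" for y
    proof
      assume "P (xi y x) = 0"
      hence "y \<in> Z" using that tau by (auto simp: Z_def)
      hence "\<tau> \<le> y" unfolding \<tau>_def by (rule cInf_lower[OF _ bZ])
      thus False using that by simp
    qed
    have nonneg: "P x * (eta y x - w (xi y x)) \<ge> 0" if "0 \<le> y" "y < \<tau>" for y
    proof -
      have "P x * P (xi y x) > 0 \<and> P x * (eta y x - w (xi y x)) \<ge> y * (P x * P (xi y x))"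
        by (rule sign_lemma[OF x that(1)]) (use before that in auto)
      moreover have "0 \<le> y * (P x * P (xi y x))" using calculation that by simp
      ultimately show ?thesis by linarith
    qed
    have "\<tau> \<noteq> 0" using tau init Px by auto
    hence tpos: "0 < \<tau>" using tau by simp
    have "P x * (eta \<tau> x - w (xi \<tau> x)) \<ge> 0"
    proof (rule ccontr)
      define v where "v = (\<lambda>t. P x * (eta t x - w (xi t x)))"
      assume "\<not> P x * (eta \<tau> x - w (xi \<tau> x)) \<ge> 0"
      hence neg: "v \<tau> < 0" by (simp add: v_def)
      have "continuous_on UNIV v" unfolding v_def by (auto intro!: continuous_intros contXE contWX)
      hence "continuous (at \<tau>) v" by (simp add: continuous_on_eq_continuous_at)
      then obtain d where d: "d > 0" "\<forall>y. dist y \<tau> < d \<longrightarrow> dist (v y) (v \<tau>) < - v \<tau>"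
        using neg unfolding continuous_at_eps_delta by (metis neg_0_less_iff_less)
      define y where "y = max 0 (\<tau> - d/2)"
      have y: "0 \<le> y" "y < \<tau>" using tpos d by (auto simp: y_def)
      have "dist y \<tau> < d" using y d by (auto simp: y_def dist_real_def)
      hence "v y < 0" using d neg by (auto simp: dist_real_def)
      thus False using nonneg[OF y] by (simp add: v_def)
    qed
    hence kt: "k \<tau> \<ge> 0" using tau by (simp add: k_def)
    show ?thesis by (rule that[of \<tau>]) (use tau kt in auto)
  qed
  obtain \<tau> where "0 \<le> \<tau>" "\<tau> \<le> \<tau>1" "k \<tau> = 0"
    using IVT'[of k 0 0 \<tau>1, OF k0 t1(3) t1(1) ck] by blast
  hence "eta \<tau> x = w (xi \<tau> x) + s * P (xi \<tau> x)" using Px by (simp add: k_def)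
  thus ?thesis using \<open>0 \<le> \<tau>\<close> \<open>\<tau> \<le> \<tau>1\<close> t1 by (intro exI[of _ \<tau>]) auto
qed

lemma ft_le1:
  assumes x: "x \<in> {a..b}" and s: "s \<in> {0..1}"
  shows "first_time xi eta w P s x \<le> 1"
proof -
  obtain \<tau> where t: "0 \<le> \<tau>" "\<tau> \<le> s" "eta \<tau> x = w (xi \<tau> x) + s * P (xi \<tau> x)"
    using t0_exists[OF x s] by blast
  have "first_time xi eta w P s x \<le> \<tau>"
    unfolding first_time_def by (rule cInf_lower) (use t in \<open>auto intro: bdd_belowI[of _ 0]\<close>)
  thus ?thesis using t s by simp
qed

end


context sys begin

abbreviation "Af \<equiv> \<lambda>y. - w1 y * P y + w y * P1 y"
abbreviation "Af' \<equiv> \<lambda>y. - w2 y * P y + w y * P2 y"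
abbreviation "Bf \<equiv> \<lambda>y. - P1 y"
abbreviation "Bf' \<equiv> \<lambda>y. - P2 y"

lemma dAf: "(Af has_real_derivative Af' y) (at y)"
proof -
  have "(Af has_real_derivative - (w2 y * P y + w1 y * P1 y) + (w1 y * P1 y + w y * P2 y)) (at y)"
    using dw dw1 dP dP1 by (auto intro!: derivative_eq_intros)
  thus ?thesis by (simp add: algebra_simps)
qed

lemma dBf: "(Bf has_real_derivative Bf' y) (at y)"
  using dP1 by (auto intro!: derivative_eq_intros)

lemma contAf': "continuous_on S Af'"
  using contw contP by (auto intro!: continuous_intros)
lemma contBf': "continuous_on S Bf'"
  using contP by (auto intro!: continuous_intros)

definition "Rw = (SOME B. B \<ge> 0 \<and> (\<forall>y\<in>{-2..2}. \<bar>w y\<bar> \<le> B))"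
lemma Rw: "Rw \<ge> 0" "\<And>y. y \<in> {-2..2} \<Longrightarrow> \<bar>w y\<bar> \<le> Rw"
  using someI_ex[OF cont_bound[OF contw(1)[of "{-2..2}"]]] unfolding Rw_def by auto

definition "LA = (SOME L. L \<ge> 0 \<and> (\<forall>y\<in>{-2..2}. \<forall>z\<in>{-2..2}. \<bar>Af y - Af z\<bar> \<le> L * \<bar>y - z\<bar>))"
lemma LA: "LA \<ge> 0" "\<And>y z. y \<in> {-2..2} \<Longrightarrow> z \<in> {-2..2} \<Longrightarrow> \<bar>Af y - Af z\<bar> \<le> LA * \<bar>y - z\<bar>"
  using someI_ex[OF lip_on[OF dAf contAf'[of "{-2..2}"]]] unfolding LA_def by auto

definition "LB = (SOME L. L \<ge> 0 \<and> (\<forall>y\<in>{-2..2}. \<forall>z\<in>{-2..2}. \<bar>Bf y - Bf z\<bar> \<le> L * \<bar>y - z\<bar>))"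
lemma LB: "LB \<ge> 0" "\<And>y z. y \<in> {-2..2} \<Longrightarrow> z \<in> {-2..2} \<Longrightarrow> \<bar>Bf y - Bf z\<bar> \<le> LB * \<bar>y - z\<bar>"
  using someI_ex[OF lip_on[OF dBf contBf'[of "{-2..2}"]]] unfolding LB_def by auto

definition "LP = (SOME L. L \<ge> 0 \<and> (\<forall>y\<in>{-2..2}. \<forall>z\<in>{-2..2}. \<bar>P y - P z\<bar> \<le> L * \<bar>y - z\<bar>))"
lemma LP: "LP \<ge> 0" "\<And>y z. y \<in> {-2..2} \<Longrightarrow> z \<in> {-2..2} \<Longrightarrow> \<bar>P y - P z\<bar> \<le> LP * \<bar>y - z\<bar>"
  using someI_ex[OF lip_on[OF dP contP(2)[of "{-2..2}"]]] unfolding LP_def by auto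

definition "LW = (SOME L. L \<ge> 0 \<and> (\<forall>y\<in>{-2..2}. \<forall>z\<in>{-2..2}. \<bar>w y - w z\<bar> \<le> L * \<bar>y - z\<bar>))"
lemma LW: "LW \<ge> 0" "\<And>y z. y \<in> {-2..2} \<Longrightarrow> z \<in> {-2..2} \<Longrightarrow> \<bar>w y - w z\<bar> \<le> LW * \<bar>y - z\<bar>"
  using someI_ex[OF lip_on[OF dw[rule_format] contw(2)[of "{-2..2}"]]] unfolding LW_def by auto

lemma F1_diff: "F1 y1 e1 - F1 y0 e0 = (Af y1 - Af y0) + e1 * (Bf y1 - Bf y0) + (e1 - e0) * Bf y0"
  by (simp add: algebra_simps)

lemma F1_lip:
  assumes "y0 \<in> {-2..2}" "y1 \<in> {-2..2}" "\<bar>e1\<bar> \<le> Rw + 1"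
  shows "\<bar>F1 y1 e1 - F1 y0 e0\<bar> \<le> (LA + (Rw + 1) * LB) * \<bar>y1 - y0\<bar> + \<bar>e1 - e0\<bar>"
proof -
  have t1: "\<bar>Af y1 - Af y0\<bar> \<le> LA * \<bar>y1 - y0\<bar>" using LA assms by auto
  have "\<bar>e1 * (Bf y1 - Bf y0)\<bar> \<le> (Rw + 1) * (LB * \<bar>y1 - y0\<bar>)"
    unfolding abs_mult using LB(2)[OF assms(2,1)] assms(3) by (intro mult_mono) auto
  hence t2: "\<bar>e1 * (Bf y1 - Bf y0)\<bar> \<le> (Rw + 1) * LB * \<bar>y1 - y0\<bar>" by (simp add: mult.assoc)
  have "\<bar>(e1 - e0) * Bf y0\<bar> \<le> \<bar>e1 - e0\<bar> * 1"
    unfolding abs_mult using Nbounds(2)[of y0] Nbounds(5) by (intro mult_left_mono) auto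
  hence t3: "\<bar>(e1 - e0) * Bf y0\<bar> \<le> \<bar>e1 - e0\<bar>" by simp
  have "\<bar>F1 y1 e1 - F1 y0 e0\<bar> \<le> \<bar>Af y1 - Af y0\<bar> + \<bar>e1 * (Bf y1 - Bf y0)\<bar> + \<bar>(e1 - e0) * Bf y0\<bar>"
    unfolding F1_diff by (rule order_trans[OF abs_triangle_ineq add_right_mono[OF abs_triangle_ineq]])
  thus ?thesis using t1 t2 t3 by (simp add: algebra_simps)
qed

end

locale traj = sys +
  fixes x :: real
  assumes xab: "x \<in> {a..b}"
begin

lemma region:
  assumes h: "\<bar>h\<bar> \<le> 1" and t: "t \<in> {0..1}"
  shows "xi t (x+h) \<in> {-2..2}" "\<bar>eta t (x+h)\<bar> \<le> Rw + 1"
proof -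
  have xh: "x + h \<in> {-2..2}" using xab a1 b1 h by auto
  show xi: "xi t (x+h) \<in> {-2..2}"
  proof (cases "x + h \<in> {a..b}")
    case True thus ?thesis using xi_in[OF True] t a1 b1 by fastforce
  next
    case False thus ?thesis using xi_out[OF False] t xh by auto
  qed
  have "\<bar>eta t (x+h) - w (x+h)\<bar> \<le> N * t" using eta_near t by auto
  also have "\<dots> \<le> 1" using Nbounds(4,5) t by (simp add: mult_le_one)
  finally show "\<bar>eta t (x+h)\<bar> \<le> Rw + 1" using Rw(2)[OF xh] by linarith
qed

definition "LF = LA + (Rw + 1) * LB + LP + 1"
definition "Lz = 2 * (1 + LW) * exp (2 * LF + 1)"

lemma LF: "LF \<ge> 1" using LA LB LP Rw unfolding LF_def by simp
lemma Lz: "Lz > 0" using LW unfolding Lz_def by simp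

lemma lipZ:
  assumes h: "\<bar>h\<bar> \<le> 1" and t: "t \<in> {0..1}"
  shows "\<bar>xi t (x+h) - xi t x\<bar> + \<bar>eta t (x+h) - eta t x\<bar> \<le> Lz * \<bar>h\<bar>"
proof -
  define f where "f = (\<lambda>t. xi t (x+h) - xi t x)"
  define g where "g = (\<lambda>t. eta t (x+h) - eta t x)"
  define f' where "f' = (\<lambda>t. F1 (xi t (x+h)) (eta t (x+h)) - F1 (xi t x) (eta t x))"
  define g' where "g' = (\<lambda>t. P (xi t (x+h)) - P (xi t x))"
  have df: "(f has_real_derivative f' t) (at t)" for t
    unfolding f_def f'_def by (rule DERIV_diff[OF dxi' dxi'])
  have dg: "(g has_real_derivative g' t) (at t)" for t
    unfolding g_def g'_def by (rule DERIV_diff[OF deta' deta'])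
  have bd: "\<bar>f' t\<bar> + \<bar>g' t\<bar> \<le> LF * (\<bar>f t\<bar> + \<bar>g t\<bar>) + 0" if t: "t \<in> {0..1}" for t
  proof -
    have r1: "xi t (x+h) \<in> {-2..2}" "\<bar>eta t (x+h)\<bar> \<le> Rw + 1" using region[OF h t] by auto
    have r0: "xi t x \<in> {-2..2}" using region[of 0 t] t by auto
    have "\<bar>f' t\<bar> \<le> (LA + (Rw + 1) * LB) * \<bar>f t\<bar> + \<bar>g t\<bar>"
      unfolding f'_def f_def g_def by (rule F1_lip[OF r0 r1])
    moreover have "\<bar>g' t\<bar> \<le> LP * \<bar>f t\<bar>" unfolding g'_def f_def by (rule LP(2)[OF r1(1) r0])
    ultimately have "\<bar>f' t\<bar> + \<bar>g' t\<bar> \<le> (LA + (Rw + 1) * LB + LP) * \<bar>f t\<bar> + \<bar>g t\<bar>"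
      by (simp add: algebra_simps)
    also have "\<dots> \<le> LF * (\<bar>f t\<bar> + \<bar>g t\<bar>)"
    proof -
      define K where "K = LA + (Rw + 1) * LB + LP"
      have K0: "0 \<le> K" using LA LB LP Rw unfolding K_def by simp
      have e: "LF * (\<bar>f t\<bar> + \<bar>g t\<bar>) = K * \<bar>f t\<bar> + \<bar>g t\<bar> + (\<bar>f t\<bar> + K * \<bar>g t\<bar>)"
        unfolding LF_def K_def by (simp add: algebra_simps)
      have "0 \<le> \<bar>f t\<bar> + K * \<bar>g t\<bar>" using K0 by simp
      thus ?thesis unfolding e K_def[symmetric] by linarith
    qed
    finally show ?thesis by simp
  qed
  have G: "\<bar>f t\<bar> + \<bar>g t\<bar> \<le> 2 * (\<bar>f 0\<bar> + \<bar>g 0\<bar> + 0) * exp ((2*LF+1) * t)"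
    by (rule gronwall2[OF _ _ _ df dg bd t]) (use LF in auto)
  have f0: "\<bar>f 0\<bar> = \<bar>h\<bar>" using init by (simp add: f_def)
  have xh: "x + h \<in> {-2..2}" "x \<in> {-2..2}" using xab a1 b1 h by auto
  have g0: "\<bar>g 0\<bar> \<le> LW * \<bar>h\<bar>" using init LW(2)[OF xh] by (simp add: g_def)
  have ex: "exp ((2*LF+1) * t) \<le> exp (2*LF+1)" using t LF by (simp add: mult_left_le)
  have "2 * (\<bar>f 0\<bar> + \<bar>g 0\<bar> + 0) * exp ((2*LF+1) * t) \<le> 2 * ((1 + LW) * \<bar>h\<bar>) * exp (2*LF+1)"
    using f0 g0 ex by (intro mult_mono) (auto simp: algebra_simps)
  with G show ?thesis unfolding f_def g_def Lz_def by (simp add: algebra_simps)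
qed

end


lemma lin_bound:
  fixes a11 a12 a21 f g r1 r2 L :: real
  assumes "\<bar>a11\<bar> + \<bar>a21\<bar> \<le> L" "\<bar>a12\<bar> \<le> L"
  shows "\<bar>a11 * f + a12 * g + r1\<bar> + \<bar>a21 * f + r2\<bar> \<le> L * (\<bar>f\<bar> + \<bar>g\<bar>) + (\<bar>r1\<bar> + \<bar>r2\<bar>)"
proof -
  have "\<bar>a11 * f + a12 * g + r1\<bar> \<le> \<bar>a11 * f + a12 * g\<bar> + \<bar>r1\<bar>" by (rule abs_triangle_ineq)
  moreover have "\<bar>a11 * f + a12 * g\<bar> \<le> \<bar>a11 * f\<bar> + \<bar>a12 * g\<bar>" by (rule abs_triangle_ineq)
  moreover have "\<bar>a21 * f + r2\<bar> \<le> \<bar>a21 * f\<bar> + \<bar>r2\<bar>" by (rule abs_triangle_ineq)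
  moreover have "\<bar>a11 * f\<bar> = \<bar>a11\<bar> * \<bar>f\<bar>" "\<bar>a12 * g\<bar> = \<bar>a12\<bar> * \<bar>g\<bar>" "\<bar>a21 * f\<bar> = \<bar>a21\<bar> * \<bar>f\<bar>"
    by (simp_all add: abs_mult)
  moreover have "(\<bar>a11\<bar> + \<bar>a21\<bar>) * \<bar>f\<bar> \<le> L * \<bar>f\<bar>" using assms(1) by (simp add: mult_right_mono)
  moreover have "\<bar>a12\<bar> * \<bar>g\<bar> \<le> L * \<bar>g\<bar>" using assms(2) by (simp add: mult_right_mono)
  ultimately show ?thesis by (simp add: algebra_simps)
qed

context traj begin

abbreviation "a11 t \<equiv> Af' (xi t x) + eta t x * Bf' (xi t x)"
abbreviation "a12 t \<equiv> Bf (xi t x)"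
abbreviation "a21 t \<equiv> P1 (xi t x)"

definition "La = (M + Ub + 1) * N"

lemma Ub0: "Ub \<ge> 0" unfolding Ub_def by simp

lemma La0: "La \<ge> 0" unfolding La_def using Mbounds(4) Ub0 Nbounds(4) by simp

lemma coef_bd:
  assumes t: "t \<in> {0..1}"
  shows "\<bar>a11 t\<bar> + \<bar>a21 t\<bar> \<le> La" "\<bar>a12 t\<bar> \<le> La"
proof -
  have xin: "xi t x \<in> {a..b}" using xi_in[OF xab] t by simp
  have e: "a11 t = - w2 (xi t x) * P (xi t x) - (eta t x - w (xi t x)) * P2 (xi t x)"
    by (simp add: algebra_simps)
  have b1: "\<bar>w2 (xi t x) * P (xi t x)\<bar> \<le> M * N"
    unfolding abs_mult using Mbounds(3)[OF xin] Nbounds(1) Mbounds(4) by (intro mult_mono) auto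
  have "\<bar>(eta t x - w (xi t x)) * P2 (xi t x)\<bar> \<le> (Ub * N) * 1"
    unfolding abs_mult using u_bound[OF xab t] Nbounds(3)[of "xi t x"] Nbounds(5) Ub0 Nbounds(4)
    by (intro mult_mono) auto
  hence b2: "\<bar>(eta t x - w (xi t x)) * P2 (xi t x)\<bar> \<le> Ub * N" by simp
  have "\<bar>a11 t\<bar> \<le> M * N + Ub * N" unfolding e using b1 b2 by linarith
  moreover have "\<bar>a21 t\<bar> \<le> N" using Nbounds(2) by simp
  ultimately show "\<bar>a11 t\<bar> + \<bar>a21 t\<bar> \<le> La" unfolding La_def by (simp add: algebra_simps)
  have "N \<le> (M + Ub + 1) * N" using Mbounds(4) Ub0 Nbounds(4) by (simp add: algebra_simps)
  thus "\<bar>a12 t\<bar> \<le> La" using Nbounds(2)[of "xi t x"] unfolding La_def by simp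
qed

abbreviation "res1 h t \<equiv> (F1 (xi t (x+h)) (eta t (x+h)) - F1 (xi t x) (eta t x))
   - (a11 t * (xi t (x+h) - xi t x) + a12 t * (eta t (x+h) - eta t x))"
abbreviation "res2 h t \<equiv> (P (xi t (x+h)) - P (xi t x)) - a21 t * (xi t (x+h) - xi t x)"

lemma res1_eq: "res1 h t = (Af (xi t (x+h)) - Af (xi t x) - Af' (xi t x) * (xi t (x+h) - xi t x))
   + eta t x * (Bf (xi t (x+h)) - Bf (xi t x) - Bf' (xi t x) * (xi t (x+h) - xi t x))
   + (eta t (x+h) - eta t x) * (Bf (xi t (x+h)) - Bf (xi t x))"
  by (simp add: algebra_simps)

lemma res_small:
  assumes e: "\<epsilon> > 0"
  shows "\<exists>\<delta>>0. \<delta> \<le> 1 \<and> (\<forall>h t. \<bar>h\<bar> < \<delta> \<longrightarrow> t \<in> {0..1} \<longrightarrow> \<bar>res1 h t\<bar> + \<bar>res2 h t\<bar> \<le> \<epsilon> * \<bar>h\<bar>)"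
proof -
  define R where "R = Rw + 1"
  have R: "R \<ge> 1" using Rw unfolding R_def by simp
  define Q where "Q = (R + 2) * Lz"
  have Q: "Q > 0" using Lz R unfolding Q_def by simp
  define e' where "e' = (\<epsilon> / 2) / Q"
  have e': "e' > 0" using e Q unfolding e'_def by simp
  have e'eq': "e' * Q = \<epsilon> / 2" using Q unfolding e'_def by simp
  have e'eq: "e' * (R + 2) * Lz = \<epsilon> / 2" using e'eq' unfolding Q_def by (simp add: mult.assoc)
  obtain dA where dA: "dA > 0" "\<forall>y\<in>{-2..2}. \<forall>z\<in>{-2..2}. \<bar>y - z\<bar> < dA \<longrightarrow>
      \<bar>Af y - Af z - Af' z * (y - z)\<bar> \<le> e' * \<bar>y - z\<bar>"
    using lin_approx[OF dAf contAf' e'] by blast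
  obtain dB where dB: "dB > 0" "\<forall>y\<in>{-2..2}. \<forall>z\<in>{-2..2}. \<bar>y - z\<bar> < dB \<longrightarrow>
      \<bar>Bf y - Bf z - Bf' z * (y - z)\<bar> \<le> e' * \<bar>y - z\<bar>"
    using lin_approx[OF dBf contBf' e'] by blast
  obtain dP where dP': "dP > 0" "\<forall>y\<in>{-2..2}. \<forall>z\<in>{-2..2}. \<bar>y - z\<bar> < dP \<longrightarrow>
      \<bar>P y - P z - P1 z * (y - z)\<bar> \<le> e' * \<bar>y - z\<bar>"
    using lin_approx[OF dP contP(2) e'] by blast
  define d0 where "d0 = min dA (min dB dP)"
  have d0: "d0 > 0" using dA dB dP' by (simp add: d0_def)
  define K where "K = 2 * (LB * Lz * Lz) + 1"
  have K: "K \<ge> 1" using LB Lz unfolding K_def by simp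
  define \<delta> where "\<delta> = min 1 (min (d0 / Lz) (\<epsilon> / K))"
  have \<delta>: "\<delta> > 0" "\<delta> \<le> 1" using d0 Lz e K by (auto simp: \<delta>_def)
  have main: "\<bar>res1 h t\<bar> + \<bar>res2 h t\<bar> \<le> \<epsilon> * \<bar>h\<bar>" if h: "\<bar>h\<bar> < \<delta>" and t: "t \<in> {0..1}" for h t
  proof -
    define y1 where "y1 = xi t (x+h)"
    define y0 where "y0 = xi t x"
    define D1 where "D1 = xi t (x+h) - xi t x"
    define D2 where "D2 = eta t (x+h) - eta t x"
    have h1: "\<bar>h\<bar> \<le> 1" using h \<delta> by simp
    have lz: "\<bar>D1\<bar> + \<bar>D2\<bar> \<le> Lz * \<bar>h\<bar>" using lipZ[OF h1 t] unfolding D1_def D2_def .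
    have r1: "y1 \<in> {-2..2}" unfolding y1_def using region[OF h1 t] by auto
    have r0: "y0 \<in> {-2..2}" "\<bar>eta t x\<bar> \<le> R" unfolding y0_def R_def using region[of 0 t] t by auto
    have "\<bar>h\<bar> < d0 / Lz" using h by (simp add: \<delta>_def)
    hence "Lz * \<bar>h\<bar> < d0" using Lz by (simp add: field_simps)
    hence D1d: "\<bar>y1 - y0\<bar> < d0" using lz unfolding y1_def y0_def D1_def by simp
    have tA: "\<bar>Af y1 - Af y0 - Af' y0 * (y1 - y0)\<bar> \<le> e' * \<bar>D1\<bar>"
      using dA(2) r1 r0 D1d unfolding d0_def D1_def y1_def y0_def by auto
    have tB: "\<bar>Bf y1 - Bf y0 - Bf' y0 * (y1 - y0)\<bar> \<le> e' * \<bar>D1\<bar>"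
      using dB(2) r1 r0 D1d unfolding d0_def D1_def y1_def y0_def by auto
    have tP: "\<bar>P y1 - P y0 - P1 y0 * (y1 - y0)\<bar> \<le> e' * \<bar>D1\<bar>"
      using dP'(2) r1 r0 D1d unfolding d0_def D1_def y1_def y0_def by auto
    have tB2: "\<bar>Bf y1 - Bf y0\<bar> \<le> LB * \<bar>D1\<bar>"
      using LB(2)[OF r1 r0(1)] unfolding D1_def y1_def y0_def by simp
    have "\<bar>eta t x * (Bf y1 - Bf y0 - Bf' y0 * (y1 - y0))\<bar> \<le> R * (e' * \<bar>D1\<bar>)"
      unfolding abs_mult using r0(2) tB R by (intro mult_mono) auto
    moreover have "\<bar>D2 * (Bf y1 - Bf y0)\<bar> \<le> \<bar>D2\<bar> * (LB * \<bar>D1\<bar>)"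
      unfolding abs_mult using tB2 by (intro mult_left_mono) auto
    moreover have "res1 h t = (Af y1 - Af y0 - Af' y0 * (y1 - y0))
       + eta t x * (Bf y1 - Bf y0 - Bf' y0 * (y1 - y0)) + D2 * (Bf y1 - Bf y0)"
      unfolding res1_eq y1_def y0_def D2_def ..
    ultimately have "\<bar>res1 h t\<bar> \<le> e' * \<bar>D1\<bar> + R * (e' * \<bar>D1\<bar>) + \<bar>D2\<bar> * (LB * \<bar>D1\<bar>)"
      using tA abs_triangle_ineq[of "(Af y1 - Af y0 - Af' y0 * (y1 - y0)) + eta t x * (Bf y1 - Bf y0 - Bf' y0 * (y1 - y0))" "D2 * (Bf y1 - Bf y0)"]
        abs_triangle_ineq[of "Af y1 - Af y0 - Af' y0 * (y1 - y0)" "eta t x * (Bf y1 - Bf y0 - Bf' y0 * (y1 - y0))"]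
      by linarith
    moreover have "\<bar>res2 h t\<bar> \<le> e' * \<bar>D1\<bar>" using tP unfolding y1_def y0_def D1_def by simp
    ultimately have S: "\<bar>res1 h t\<bar> + \<bar>res2 h t\<bar> \<le> e' * (R + 2) * \<bar>D1\<bar> + LB * (\<bar>D2\<bar> * \<bar>D1\<bar>)"
      by (simp add: algebra_simps)
    have D1b: "\<bar>D1\<bar> \<le> Lz * \<bar>h\<bar>" and D2b: "\<bar>D2\<bar> \<le> Lz * \<bar>h\<bar>" using lz by auto
    have "e' * (R + 2) * \<bar>D1\<bar> \<le> e' * (R + 2) * (Lz * \<bar>h\<bar>)"
      using D1b e' R by (intro mult_left_mono) auto
    also have "\<dots> = (e' * (R + 2) * Lz) * \<bar>h\<bar>" by (simp only: mult.assoc)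
    also have "\<dots> = (\<epsilon> / 2) * \<bar>h\<bar>" by (simp only: e'eq)
    finally have p1: "e' * (R + 2) * \<bar>D1\<bar> \<le> (\<epsilon> / 2) * \<bar>h\<bar>" .
    have "\<bar>D2\<bar> * \<bar>D1\<bar> \<le> (Lz * \<bar>h\<bar>) * (Lz * \<bar>h\<bar>)" using D1b D2b by (intro mult_mono) auto
    hence "LB * (\<bar>D2\<bar> * \<bar>D1\<bar>) \<le> LB * ((Lz * \<bar>h\<bar>) * (Lz * \<bar>h\<bar>))" using LB by (intro mult_left_mono) auto
    also have "\<dots> = (LB * Lz * Lz * \<bar>h\<bar>) * \<bar>h\<bar>" by (simp add: algebra_simps)
    also have "\<dots> \<le> (\<epsilon> / 2) * \<bar>h\<bar>"
    proof (rule mult_right_mono)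
      have "\<bar>h\<bar> \<le> \<epsilon> / K" using h by (simp add: \<delta>_def)
      hence "K * \<bar>h\<bar> \<le> \<epsilon>" using K by (simp add: field_simps)
      moreover have "2 * (LB * Lz * Lz * \<bar>h\<bar>) \<le> K * \<bar>h\<bar>" unfolding K_def by (simp add: algebra_simps)
      ultimately show "LB * Lz * Lz * \<bar>h\<bar> \<le> \<epsilon> / 2" by simp
    qed simp
    finally have p2: "LB * (\<bar>D2\<bar> * \<bar>D1\<bar>) \<le> (\<epsilon> / 2) * \<bar>h\<bar>" .
    show ?thesis using S p1 p2 by simp
  qed
  show ?thesis using \<delta> main by blast
qed

end


lemma alg1: "(F::real) / h = A * (X / h) + B * (Y / h) + (F - (A * X + B * Y)) / h"
  by (cases "h = 0") (simp_all add: field_simps)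
lemma alg2: "(G::real) / h = C * (X / h) + (G - C * X) / h"
  by (cases "h = 0") (simp_all add: field_simps)

lemma alg3: "((A::real) * X1 + B * Y1 + R1) - (A * X2 + B * Y2 + R2) = A * (X1 - X2) + B * (Y1 - Y2) + (R1 - R2)"
  by (simp add: algebra_simps)
lemma alg4: "((C::real) * X1 + R1) - (C * X2 + R2) = C * (X1 - X2) + (R1 - R2)"
  by (simp add: algebra_simps)

context traj begin

abbreviation "dq h t \<equiv> (xi t (x+h) - xi t x) / h"
abbreviation "eq h t \<equiv> (eta t (x+h) - eta t x) / h"
abbreviation "qw h \<equiv> (w (x+h) - w x) / h"

definition "EE = exp (2 * La + 1)"
lemma EE: "EE \<ge> 1" unfolding EE_def using La0 by simp

lemma ddq: "((\<lambda>t. dq h t) has_real_derivative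
     a11 t * dq h t + a12 t * eq h t + res1 h t / h) (at t)"
proof -
  have "((\<lambda>t. dq h t) has_real_derivative
     (F1 (xi t (x+h)) (eta t (x+h)) - F1 (xi t x) (eta t x)) / h) (at t)"
    by (rule DERIV_cdivide[OF DERIV_diff[OF dxi' dxi']])
  thus ?thesis by (rule DERIV_cong) (rule alg1)
qed

lemma deq: "((\<lambda>t. eq h t) has_real_derivative a21 t * dq h t + res2 h t / h) (at t)"
proof -
  have "((\<lambda>t. eq h t) has_real_derivative (P (xi t (x+h)) - P (xi t x)) / h) (at t)"
    by (rule DERIV_cdivide[OF DERIV_diff[OF deta' deta']])
  thus ?thesis by (rule DERIV_cong) (rule alg2)
qed

lemma res_div:
  assumes "\<bar>res1 h t\<bar> + \<bar>res2 h t\<bar> \<le> \<epsilon> * \<bar>h\<bar>" "h \<noteq> 0"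
  shows "\<bar>res1 h t / h\<bar> + \<bar>res2 h t / h\<bar> \<le> \<epsilon>"
proof -
  have "\<bar>res1 h t / h\<bar> + \<bar>res2 h t / h\<bar> = (\<bar>res1 h t\<bar> + \<bar>res2 h t\<bar>) / \<bar>h\<bar>"
    by (simp add: add_divide_distrib)
  also have "\<dots> \<le> \<epsilon>" using assms by (simp add: divide_le_eq)
  finally show ?thesis .
qed

lemma w_quot:
  assumes e: "\<epsilon> > 0"
  shows "\<exists>\<delta>>0. \<forall>h. 0 < \<bar>h\<bar> \<and> \<bar>h\<bar> < \<delta> \<longrightarrow> \<bar>qw h - w1 x\<bar> < \<epsilon>"
proof -
  have "((\<lambda>h. qw h) \<longlongrightarrow> w1 x) (at 0)" using DERIV_D[OF dw[rule_format]] .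
  hence "eventually (\<lambda>h. dist (qw h) (w1 x) < \<epsilon>) (at 0)" using e by (rule tendstoD)
  then obtain d where "d > 0" "\<forall>h. h \<noteq> 0 \<and> dist h 0 < d \<longrightarrow> dist (qw h) (w1 x) < \<epsilon>"
    unfolding eventually_at by auto
  thus ?thesis by (intro exI[of _ d]) (auto simp: dist_real_def)
qed

lemma cauchy_dq:
  assumes e: "\<epsilon> > 0"
  shows "\<exists>\<delta>>0. \<forall>h k t. 0 < \<bar>h\<bar> \<longrightarrow> \<bar>h\<bar> < \<delta> \<longrightarrow> 0 < \<bar>k\<bar> \<longrightarrow> \<bar>k\<bar> < \<delta> \<longrightarrow> t \<in> {0..1} \<longrightarrow>
     \<bar>dq h t - dq k t\<bar> + \<bar>eq h t - eq k t\<bar> \<le> \<epsilon>"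
proof -
  define e1 where "e1 = \<epsilon> / (8 * EE)"
  have e1: "e1 > 0" using e EE unfolding e1_def by simp
  have e1eq: "8 * e1 * EE = \<epsilon>" using EE unfolding e1_def by simp
  obtain d1 where d1: "d1 > 0" "\<forall>h t. \<bar>h\<bar> < d1 \<longrightarrow> t \<in> {0..1} \<longrightarrow> \<bar>res1 h t\<bar> + \<bar>res2 h t\<bar> \<le> e1 * \<bar>h\<bar>"
    using res_small[OF e1] by blast
  obtain d2 where d2: "d2 > 0" "\<forall>h. 0 < \<bar>h\<bar> \<and> \<bar>h\<bar> < d2 \<longrightarrow> \<bar>qw h - w1 x\<bar> < e1"
    using w_quot[OF e1] by blast
  define \<delta> where "\<delta> = min d1 d2"
  have "\<bar>dq h t - dq k t\<bar> + \<bar>eq h t - eq k t\<bar> \<le> \<epsilon>"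
    if h: "0 < \<bar>h\<bar>" "\<bar>h\<bar> < \<delta>" and k: "0 < \<bar>k\<bar>" "\<bar>k\<bar> < \<delta>" and t: "t \<in> {0..1}" for h k t
  proof -
    define f where "f = (\<lambda>t. dq h t - dq k t)"
    define g where "g = (\<lambda>t. eq h t - eq k t)"
    define r1 where "r1 = (\<lambda>t. res1 h t / h - res1 k t / k)"
    define r2 where "r2 = (\<lambda>t. res2 h t / h - res2 k t / k)"
    define f' where "f' = (\<lambda>t. a11 t * f t + a12 t * g t + r1 t)"
    define g' where "g' = (\<lambda>t. a21 t * f t + r2 t)"
    have df: "(f has_real_derivative f' s) (at s)" for s
    proof -
      have "(f has_real_derivative (a11 s * dq h s + a12 s * eq h s + res1 h s / h)
             - (a11 s * dq k s + a12 s * eq k s + res1 k s / k)) (at s)"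
        unfolding f_def by (rule DERIV_diff[OF ddq ddq])
      moreover have "(a11 s * dq h s + a12 s * eq h s + res1 h s / h)
             - (a11 s * dq k s + a12 s * eq k s + res1 k s / k) = f' s"
        unfolding f'_def f_def g_def r1_def by (rule alg3)
      ultimately show ?thesis by (rule DERIV_cong)
    qed
    have dg: "(g has_real_derivative g' s) (at s)" for s
    proof -
      have "(g has_real_derivative (a21 s * dq h s + res2 h s / h) - (a21 s * dq k s + res2 k s / k)) (at s)"
        unfolding g_def by (rule DERIV_diff[OF deq deq])
      moreover have "(a21 s * dq h s + res2 h s / h) - (a21 s * dq k s + res2 k s / k) = g' s"
        unfolding g'_def f_def r2_def by (rule alg4)
      ultimately show ?thesis by (rule DERIV_cong)
    qed
    have bd: "\<bar>f' s\<bar> + \<bar>g' s\<bar> \<le> La * (\<bar>f s\<bar> + \<bar>g s\<bar>) + 2 * e1" if s: "s \<in> {0..1}" for s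
    proof -
      have "\<bar>f' s\<bar> + \<bar>g' s\<bar> \<le> La * (\<bar>f s\<bar> + \<bar>g s\<bar>) + (\<bar>r1 s\<bar> + \<bar>r2 s\<bar>)"
        unfolding f'_def g'_def by (rule lin_bound[OF coef_bd[OF s]])
      moreover have "\<bar>res1 h s / h\<bar> + \<bar>res2 h s / h\<bar> \<le> e1"
      proof (rule res_div)
        show "\<bar>res1 h s\<bar> + \<bar>res2 h s\<bar> \<le> e1 * \<bar>h\<bar>"
          by (rule d1(2)[rule_format]) (use h s in \<open>auto simp: \<delta>_def\<close>)
      qed (use h in auto)
      moreover have "\<bar>res1 k s / k\<bar> + \<bar>res2 k s / k\<bar> \<le> e1"
      proof (rule res_div)
        show "\<bar>res1 k s\<bar> + \<bar>res2 k s\<bar> \<le> e1 * \<bar>k\<bar>"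
          by (rule d1(2)[rule_format]) (use k s in \<open>auto simp: \<delta>_def\<close>)
      qed (use k in auto)
      moreover have "\<bar>r1 s\<bar> \<le> \<bar>res1 h s / h\<bar> + \<bar>res1 k s / k\<bar>" unfolding r1_def by (rule abs_triangle_ineq4)
      moreover have "\<bar>r2 s\<bar> \<le> \<bar>res2 h s / h\<bar> + \<bar>res2 k s / k\<bar>" unfolding r2_def by (rule abs_triangle_ineq4)
      ultimately show ?thesis by linarith
    qed
    have G: "\<bar>f t\<bar> + \<bar>g t\<bar> \<le> 2 * (\<bar>f 0\<bar> + \<bar>g 0\<bar> + 2 * e1) * exp ((2 * La + 1) * t)"
      by (rule gronwall2[OF _ La0 _ df dg bd t]) (use e1 in auto)
    have "f 0 = 0" using init h k by (simp add: f_def)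
    moreover have "\<bar>g 0\<bar> \<le> 2 * e1"
    proof -
      have "g 0 = qw h - qw k" using init by (simp add: g_def)
      moreover have "\<bar>qw h - w1 x\<bar> < e1" "\<bar>qw k - w1 x\<bar> < e1" using d2 h k by (auto simp: \<delta>_def)
      ultimately show ?thesis by linarith
    qed
    moreover have "exp ((2 * La + 1) * t) \<le> EE" unfolding EE_def using t La0 by (simp add: mult_left_le)
    ultimately have "2 * (\<bar>f 0\<bar> + \<bar>g 0\<bar> + 2 * e1) * exp ((2 * La + 1) * t) \<le> 2 * (4 * e1) * EE"
      using e1 by (intro mult_mono) auto
    with G have "\<bar>f t\<bar> + \<bar>g t\<bar> \<le> 8 * e1 * EE" by simp
    thus ?thesis using e1eq unfolding f_def g_def by simp
  qed
  moreover have "\<delta> > 0" using d1 d2 by (simp add: \<delta>_def)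
  ultimately show ?thesis by blast
qed

end


lemma alg5: "(A::real) * X + B * Y + R = A * (X - 1) + B * (Y - q) + (A + B * q + R)"
  by (simp add: algebra_simps)
lemma alg6: "(C::real) * X + R = C * (X - 1) + (C + R)"
  by (simp add: algebra_simps)

context traj begin

lemma quot_bound:
  assumes e1: "e1 > 0" and d1: "\<forall>h t. \<bar>h\<bar> < d1 \<longrightarrow> t \<in> {0..1} \<longrightarrow> \<bar>res1 h t\<bar> + \<bar>res2 h t\<bar> \<le> e1 * \<bar>h\<bar>"
    and h: "0 < \<bar>h\<bar>" "\<bar>h\<bar> < d1" and t: "t \<in> {0..1}"
  shows "\<bar>dq h t - 1\<bar> + \<bar>eq h t - qw h\<bar> \<le> 2 * (La * (1 + \<bar>qw h\<bar>) + e1) * EE"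
proof -
  define c where "c = La * (1 + \<bar>qw h\<bar>) + e1"
  define f where "f = (\<lambda>s. dq h s - 1)"
  define g where "g = (\<lambda>s. eq h s - qw h)"
  define f' where "f' = (\<lambda>s. a11 s * f s + a12 s * g s + (a11 s + a12 s * qw h + res1 h s / h))"
  define g' where "g' = (\<lambda>s. a21 s * f s + (a21 s + res2 h s / h))"
  have df: "(f has_real_derivative f' s) (at s)" for s
  proof -
    have "(f has_real_derivative a11 s * dq h s + a12 s * eq h s + res1 h s / h - 0) (at s)"
      unfolding f_def by (rule DERIV_diff[OF ddq DERIV_const])
    thus ?thesis unfolding f'_def f_def g_def by (rule DERIV_cong) (subst diff_zero, rule alg5)
  qed
  have dg: "(g has_real_derivative g' s) (at s)" for s
  proof -
    have "(g has_real_derivative a21 s * dq h s + res2 h s / h - 0) (at s)"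
      unfolding g_def by (rule DERIV_diff[OF deq DERIV_const])
    thus ?thesis unfolding g'_def f_def by (rule DERIV_cong) (subst diff_zero, rule alg6)
  qed
  have bd: "\<bar>f' s\<bar> + \<bar>g' s\<bar> \<le> La * (\<bar>f s\<bar> + \<bar>g s\<bar>) + c" if s: "s \<in> {0..1}" for s
  proof -
    have L1: "\<bar>f' s\<bar> + \<bar>g' s\<bar> \<le> La * (\<bar>f s\<bar> + \<bar>g s\<bar>)
        + (\<bar>a11 s + a12 s * qw h + res1 h s / h\<bar> + \<bar>a21 s + res2 h s / h\<bar>)"
      unfolding f'_def g'_def by (rule lin_bound[OF coef_bd[OF s]])
    have r: "\<bar>res1 h s / h\<bar> + \<bar>res2 h s / h\<bar> \<le> e1"
    proof (rule res_div)
      show "\<bar>res1 h s\<bar> + \<bar>res2 h s\<bar> \<le> e1 * \<bar>h\<bar>"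
        by (rule d1[rule_format]) (use h s in auto)
    qed (use h in auto)
    have cb: "\<bar>a11 s\<bar> + \<bar>a21 s\<bar> \<le> La" "\<bar>a12 s\<bar> \<le> La" using coef_bd[OF s] by auto
    have "\<bar>a12 s * qw h\<bar> \<le> La * \<bar>qw h\<bar>" unfolding abs_mult by (rule mult_right_mono[OF cb(2) abs_ge_zero])
    moreover have "\<bar>a11 s + a12 s * qw h + res1 h s / h\<bar> \<le> \<bar>a11 s\<bar> + \<bar>a12 s * qw h\<bar> + \<bar>res1 h s / h\<bar>"
      by (rule order_trans[OF abs_triangle_ineq add_right_mono[OF abs_triangle_ineq]])
    moreover have "\<bar>a21 s + res2 h s / h\<bar> \<le> \<bar>a21 s\<bar> + \<bar>res2 h s / h\<bar>" by (rule abs_triangle_ineq)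
    ultimately have "\<bar>a11 s + a12 s * qw h + res1 h s / h\<bar> + \<bar>a21 s + res2 h s / h\<bar> \<le> c"
      using cb(1) r unfolding c_def by (simp add: algebra_simps)
    with L1 show ?thesis by linarith
  qed
  have c0: "0 \<le> c" using La0 e1 unfolding c_def by simp
  have G: "\<bar>f t\<bar> + \<bar>g t\<bar> \<le> 2 * (\<bar>f 0\<bar> + \<bar>g 0\<bar> + c) * exp ((2 * La + 1) * t)"
    by (rule gronwall2[OF _ La0 c0 df dg bd t]) simp
  have "f 0 = 0" using init h by (simp add: f_def)
  moreover have "g 0 = 0" using init by (simp add: g_def)
  moreover have "exp ((2 * La + 1) * t) \<le> EE" unfolding EE_def using t La0 by (simp add: mult_left_le)
  ultimately have "2 * (\<bar>f 0\<bar> + \<bar>g 0\<bar> + c) * exp ((2 * La + 1) * t) \<le> 2 * c * EE"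
    using c0 by (simp add: mult_left_mono)
  with G show ?thesis unfolding f_def g_def c_def by simp
qed

lemma deriv_exists:
  assumes t: "t \<in> {0..1}"
  shows "\<exists>D E. ((\<lambda>y. xi t y) has_real_derivative D) (at x) \<and> ((\<lambda>y. eta t y) has_real_derivative E) (at x)
     \<and> \<bar>D - 1\<bar> + \<bar>E - w1 x\<bar> \<le> 2 * La * (1 + \<bar>w1 x\<bar>) * EE"
proof -
  have cz: "\<exists>d>0. \<forall>h k. 0 < \<bar>h\<bar> \<and> \<bar>h\<bar> < d \<and> 0 < \<bar>k\<bar> \<and> \<bar>k\<bar> < d \<longrightarrow>
      \<bar>dq h t - dq k t\<bar> < e \<and> \<bar>eq h t - eq k t\<bar> < e" if e: "e > 0" for e
  proof -
    have e2: "e/2 > 0" using e by simp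
    from cauchy_dq[OF e2] obtain d where d: "d > 0" and dd: "\<And>h k t. 0 < \<bar>h\<bar> \<Longrightarrow> \<bar>h\<bar> < d \<Longrightarrow> 0 < \<bar>k\<bar> \<Longrightarrow> \<bar>k\<bar> < d \<Longrightarrow> t \<in> {0..1} \<Longrightarrow>
     \<bar>dq h t - dq k t\<bar> + \<bar>eq h t - eq k t\<bar> \<le> e / 2"
      by blast
    have "\<bar>dq h t - dq k t\<bar> < e \<and> \<bar>eq h t - eq k t\<bar> < e"
      if "0 < \<bar>h\<bar> \<and> \<bar>h\<bar> < d \<and> 0 < \<bar>k\<bar> \<and> \<bar>k\<bar> < d" for h k
    proof -
      have "\<bar>dq h t - dq k t\<bar> + \<bar>eq h t - eq k t\<bar> \<le> e / 2"
        using that by (intro dd t) auto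
      thus ?thesis using e by linarith
    qed
    thus ?thesis using d by blast
  qed
  have czD: "\<exists>d>0. \<forall>h k. 0 < \<bar>h\<bar> \<and> \<bar>h\<bar> < d \<and> 0 < \<bar>k\<bar> \<and> \<bar>k\<bar> < d \<longrightarrow>
      \<bar>dq h t - dq k t\<bar> < e" if e: "e > 0" for e
  proof -
    from cz[OF e] obtain d where "d > 0" "\<forall>h k. 0 < \<bar>h\<bar> \<and> \<bar>h\<bar> < d \<and> 0 < \<bar>k\<bar> \<and> \<bar>k\<bar> < d \<longrightarrow>
      \<bar>dq h t - dq k t\<bar> < e \<and> \<bar>eq h t - eq k t\<bar> < e" by blast
    thus ?thesis by blast
  qed
  have czE: "\<exists>d>0. \<forall>h k. 0 < \<bar>h\<bar> \<and> \<bar>h\<bar> < d \<and> 0 < \<bar>k\<bar> \<and> \<bar>k\<bar> < d \<longrightarrow>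
      \<bar>eq h t - eq k t\<bar> < e" if e: "e > 0" for e
  proof -
    from cz[OF e] obtain d where "d > 0" "\<forall>h k. 0 < \<bar>h\<bar> \<and> \<bar>h\<bar> < d \<and> 0 < \<bar>k\<bar> \<and> \<bar>k\<bar> < d \<longrightarrow>
      \<bar>dq h t - dq k t\<bar> < e \<and> \<bar>eq h t - eq k t\<bar> < e" by blast
    thus ?thesis by blast
  qed
  obtain D where limD: "((\<lambda>h. dq h t) \<longlongrightarrow> D) (at 0)"
    using cauchy_lim[where f="\<lambda>h. dq h t", OF czD] by blast
  obtain E where limE: "((\<lambda>h. eq h t) \<longlongrightarrow> E) (at 0)"
    using cauchy_lim[where f="\<lambda>h. eq h t", OF czE] by blast
  have dD: "((\<lambda>y. xi t y) has_real_derivative D) (at x)" unfolding DERIV_def using limD by simp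
  have dE: "((\<lambda>y. eta t y) has_real_derivative E) (at x)" unfolding DERIV_def using limE by simp
  have limW: "((\<lambda>h. qw h) \<longlongrightarrow> w1 x) (at 0)" using DERIV_D[OF dw[rule_format]] .
  have "\<bar>D - 1\<bar> + \<bar>E - w1 x\<bar> \<le> 2 * La * (1 + \<bar>w1 x\<bar>) * EE"
  proof (rule field_le_epsilon)
    fix e :: real assume e: "0 < e"
    define e1 where "e1 = e / (2 * EE)"
    have e1: "e1 > 0" using e EE by (simp add: e1_def)
    have e1eq: "2 * e1 * EE = e" using EE by (simp add: e1_def)
    obtain d1 where d1: "d1 > 0" "\<forall>h t. \<bar>h\<bar> < d1 \<longrightarrow> t \<in> {0..1} \<longrightarrow> \<bar>res1 h t\<bar> + \<bar>res2 h t\<bar> \<le> e1 * \<bar>h\<bar>"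
      using res_small[OF e1] by blast
    have ev: "eventually (\<lambda>h. \<bar>dq h t - 1\<bar> + \<bar>eq h t - qw h\<bar> \<le> 2 * (La * (1 + \<bar>qw h\<bar>) + e1) * EE) (at 0)"
      unfolding eventually_at
    proof (rule exI[of _ d1], intro conjI ballI impI)
      show "d1 > 0" by (rule d1(1))
      fix h :: real assume "h \<in> UNIV" "h \<noteq> 0 \<and> dist h 0 < d1"
      hence "0 < \<bar>h\<bar>" "\<bar>h\<bar> < d1" by (auto simp: dist_real_def)
      thus "\<bar>dq h t - 1\<bar> + \<bar>eq h t - qw h\<bar> \<le> 2 * (La * (1 + \<bar>qw h\<bar>) + e1) * EE"
        by (rule quot_bound[OF e1 d1(2) _ _ t])
    qed
    have l1: "((\<lambda>h. \<bar>dq h t - 1\<bar> + \<bar>eq h t - qw h\<bar>) \<longlongrightarrow> \<bar>D - 1\<bar> + \<bar>E - w1 x\<bar>) (at 0)"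
      by (intro tendsto_intros limD limE limW)
    have l2: "((\<lambda>h. 2 * (La * (1 + \<bar>qw h\<bar>) + e1) * EE) \<longlongrightarrow> 2 * (La * (1 + \<bar>w1 x\<bar>) + e1) * EE) (at 0)"
      by (intro tendsto_intros limW)
    have "\<bar>D - 1\<bar> + \<bar>E - w1 x\<bar> \<le> 2 * (La * (1 + \<bar>w1 x\<bar>) + e1) * EE"
      by (rule tendsto_le[OF _ l2 l1 ev]) simp
    also have "\<dots> = 2 * La * (1 + \<bar>w1 x\<bar>) * EE + 2 * e1 * EE" by (simp add: algebra_simps)
    finally show "\<bar>D - 1\<bar> + \<bar>E - w1 x\<bar> \<le> 2 * La * (1 + \<bar>w1 x\<bar>) * EE + e" using e1eq by simp
  qed
  thus ?thesis using dD dE by blast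
qed

end


definition Ubg :: "real \<Rightarrow> real" where "Ubg M = 2 * (1 + M^2) * exp (2*M+1)"
definition Kc :: "real \<Rightarrow> real" where
  "Kc M = 2 * (M + Ubg M + 1) * (1 + M) * exp (2 * (M + Ubg M + 1) + 1)"
definition Cc :: "real \<Rightarrow> real" where "Cc M = (if 0 \<le> M then Kc M + 1 else 1)"

lemma Cc_pos: "Cc M > 0"
proof (cases "0 \<le> M")
  case True
  have "0 \<le> Ubg M" unfolding Ubg_def by simp
  hence "0 \<le> Kc M" unfolding Kc_def using True by simp
  thus ?thesis using True by (simp add: Cc_def)
qed (simp add: Cc_def)

context sys begin

lemma out_case:
  assumes x: "x \<notin> {a..b}" and t: "0 \<le> t"
  shows "((\<lambda>y. xi t y) has_real_derivative 1) (at x) \<and> ((\<lambda>y. eta t y) has_real_derivative w1 x) (at x)"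
proof
  have U: "open (- {a..b})" "x \<in> - {a..b}" using x by auto
  show "((\<lambda>y. xi t y) has_real_derivative 1) (at x)"
    by (rule has_field_derivative_transform_within_open[OF DERIV_ident U]) (use xi_out t in auto)
  show "((\<lambda>y. eta t y) has_real_derivative w1 x) (at x)"
    by (rule has_field_derivative_transform_within_open[OF dw[rule_format] U]) (use xi_out t in auto)
qed

end

context traj begin

lemma final_traj:
  assumes t: "t \<in> {0..1}"
  shows "\<exists>D E. ((\<lambda>y. xi t y) has_real_derivative D) (at x) \<and> ((\<lambda>y. eta t y) has_real_derivative E) (at x)
     \<and> \<bar>D - 1\<bar> \<le> Kc M * N \<and> \<bar>E - w1 x\<bar> \<le> Kc M * N"
proof -
  obtain D E where DE: "((\<lambda>y. xi t y) has_real_derivative D) (at x)" "((\<lambda>y. eta t y) has_real_derivative E) (at x)"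
     "\<bar>D - 1\<bar> + \<bar>E - w1 x\<bar> \<le> 2 * La * (1 + \<bar>w1 x\<bar>) * EE"
    using deriv_exists[OF t] by blast
  have M0: "0 \<le> M" by (rule Mbounds(4))
  have UbU: "Ub = Ubg M" unfolding Ub_def Ubg_def ..
  have K0: "0 \<le> M + Ub + 1" using M0 Ub0 by simp
  have La1: "La \<le> M + Ub + 1" unfolding La_def using K0 Nbounds(5) by (simp add: mult_left_le)
  have EE1: "EE \<le> exp (2 * (M + Ub + 1) + 1)" unfolding EE_def using La1 by simp
  have w1x: "\<bar>w1 x\<bar> \<le> M" by (rule Mbounds(2)[OF xab])
  have "2 * La * (1 + \<bar>w1 x\<bar>) * EE = N * (2 * (M + Ub + 1) * (1 + \<bar>w1 x\<bar>) * EE)"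
    unfolding La_def by (simp add: algebra_simps)
  also have "\<dots> \<le> N * (2 * (M + Ub + 1) * (1 + M) * exp (2 * (M + Ub + 1) + 1))"
  proof (rule mult_left_mono[OF _ Nbounds(4)])
    have f1: "2 * (M + Ub + 1) * (1 + \<bar>w1 x\<bar>) \<le> 2 * (M + Ub + 1) * (1 + M)"
      using w1x K0 by (intro mult_left_mono) auto
    have f2: "0 \<le> EE" using EE by simp
    have f3: "0 \<le> 2 * (M + Ub + 1) * (1 + M)" using K0 M0 by simp
    show "2 * (M + Ub + 1) * (1 + \<bar>w1 x\<bar>) * EE \<le> 2 * (M + Ub + 1) * (1 + M) * exp (2 * (M + Ub + 1) + 1)"
      by (rule mult_mono[OF f1 EE1 f3 f2])
  qed
  also have "\<dots> = Kc M * N" unfolding Kc_def UbU by (simp add: algebra_simps)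
  finally have "\<bar>D - 1\<bar> + \<bar>E - w1 x\<bar> \<le> Kc M * N" using DE(3) by linarith
  hence "\<bar>D - 1\<bar> \<le> Kc M * N \<and> \<bar>E - w1 x\<bar> \<le> Kc M * N" by linarith
  thus ?thesis using DE(1,2) by blast
qed

end

theorem proposition3p7:
  fixes M :: real
  shows "\<exists>C>0. \<forall>(w::real\<Rightarrow>real) w1 w2 w3 (a::real) b (p::real poly)
            (xi::real\<Rightarrow>real\<Rightarrow>real) (eta::real\<Rightarrow>real\<Rightarrow>real).
     (\<forall>x. (w has_real_derivative w1 x) (at x)) \<longrightarrow>
     (\<forall>x. (w1 has_real_derivative w2 x) (at x)) \<longrightarrow>
     (\<forall>x. (w2 has_real_derivative w3 x) (at x)) \<longrightarrow>
     continuous_on UNIV w3 \<longrightarrow>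
     (\<exists>T>0. \<forall>x. w (x + T) = w x) \<longrightarrow>
     (\<forall>x\<in>{-1..1}. w x > 0) \<longrightarrow>
     -1 < a \<longrightarrow> a < b \<longrightarrow> b < 1 \<longrightarrow>
     (\<forall>k\<le>3. poly ((pderiv ^^ k) p) a = 0 \<and> poly ((pderiv ^^ k) p) b = 0) \<longrightarrow>
     (\<forall>x t. ((\<lambda>t. xi t x) has_real_derivative
               (- w1 (xi t x) * ext_poly p a b (xi t x)
                - (eta t x - w (xi t x)) * ext_poly (pderiv p) a b (xi t x))) (at t)) \<longrightarrow>
     (\<forall>x t. ((\<lambda>t. eta t x) has_real_derivative ext_poly p a b (xi t x)) (at t)) \<longrightarrow>
     (\<forall>x. xi 0 x = x \<and> eta 0 x = w x) \<longrightarrow>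
     C2norm_on w w1 w2 a b \<le> M \<longrightarrow>
     polyC2norm p a b < 1 \<longrightarrow>
     (\<forall>s\<in>{0..1}. \<forall>x. \<forall>t. 0 \<le> t \<and> t \<le> first_time xi eta w (ext_poly p a b) s x \<longrightarrow>
        (\<exists>D. ((\<lambda>y. xi t y) has_real_derivative D) (at x) \<and>
             \<bar>D - 1\<bar> \<le> C * polyC2norm p a b) \<and>
        (\<exists>E. ((\<lambda>y. eta t y) has_real_derivative E) (at x) \<and>
             \<bar>E - w1 x\<bar> \<le> C * polyC2norm p a b))"
  apply (rule exI[of _ "Cc M"])
  apply (intro conjI Cc_pos allI impI)
  subgoal premises prems for w w1 w2 w3 a b p xi eta
  proof -
    interpret sys w w1 w2 w3 a b p xi eta M
      by (rule sys.intro[OF prems(1) prems(2) prems(3) prems(7) prems(8) prems(9) prems(10) prems(11) prems(12) prems(13) prems(14) prems(15)])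
    have M0: "0 \<le> M" by (rule Mbounds(4))
    have CK: "Cc M = Kc M + 1" using M0 by (simp add: Cc_def)
    have N0: "0 \<le> N" by (rule Nbounds(4))
    have KN: "Kc M * N \<le> Cc M * N" unfolding CK using N0 by (simp add: algebra_simps)
    have CN: "0 \<le> Cc M * N" using Cc_pos[of M] N0 by simp
    show ?thesis
    proof (intro ballI allI impI)
      fix s x t
      assume s: "s \<in> {0..1}" and tt: "0 \<le> t \<and> t \<le> first_time xi eta w (ext_poly p a b) s x"
      show "(\<exists>D. ((\<lambda>y. xi t y) has_real_derivative D) (at x) \<and> \<bar>D - 1\<bar> \<le> Cc M * polyC2norm p a b) \<and>
            (\<exists>E. ((\<lambda>y. eta t y) has_real_derivative E) (at x) \<and> \<bar>E - w1 x\<bar> \<le> Cc M * polyC2norm p a b)"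
      proof (cases "x \<in> {a..b}")
        case True
        interpret traj w w1 w2 w3 a b p xi eta M x by unfold_locales (rule True)
        have "t \<le> 1" using ft_le1[OF True s] tt by linarith
        hence t01: "t \<in> {0..1}" using tt by simp
        obtain D E where DE: "((\<lambda>y. xi t y) has_real_derivative D) (at x)" "((\<lambda>y. eta t y) has_real_derivative E) (at x)"
          "\<bar>D - 1\<bar> \<le> Kc M * N" "\<bar>E - w1 x\<bar> \<le> Kc M * N"
          using final_traj[OF t01] by blast
        show ?thesis using DE KN by auto
      next
        case False
        have "((\<lambda>y. xi t y) has_real_derivative 1) (at x) \<and> ((\<lambda>y. eta t y) has_real_derivative w1 x) (at x)"
          using out_case[OF False] tt by simp
        thus ?thesis using CN by auto
      qed
    qed
  qed
  done


end
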